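(* Let $T$ be a ranked monad, $L$ a locale and $f\colon L\to\mathrm{LB}_0T$ a locale map. The pullback $L\times_{\mathrm{LB}_0T}\mathrm{LB}_1T$ of $f$ along the source map $\sigma\colon\mathrm{LB}_1T\to\mathrm{LB}_0T$ has frame of opens isomorphic to the pointwise-ordered poset of functions $h\colon T1\to\mathcal{O}(L)$ such that for all $m_1,m_2\in T1$ and every complemented open $b$ of $\mathrm{LB}_0T$, $m_1\sim_bm_2$ implies $h(m_1)\wedge f^{-1}(b)=h(m_2)\wedge f^{-1}(b)$.
   Context: Monads on $\mathbf{Set}$: sets $TA$, $\mathrm{return}$, $\mathbin{\gg\!=}\colon TA\times(TB)^A\to TB$ with monad laws; $t\gg s:=t\mathbin{\gg\!=}\lambda a.s$; ranked of rank $\kappa$: every $t\in TA$ is $t'\mathbin{\gg\!=}\lambda i.\mathrm{return}\,f(i)$ with $t'\in TI$, $|I|<\kappa$. $1=\{*\}$, $2=\{0,1\}$. Locales: opposite of frames, $\mathcal{O}(L)$ the frame, $f^{-1}$ the frame map of $f$. $\mathrm{LB}_0T$: frame presented by generators $[b]$ ($b\in T2$) with relations $[t\mapsto a]\wedge[t\mapsto a']=\bot$ ($a\ne a'$), $[t\gg\mathrm{return}\,a\mapsto a]=\top$, $[t\mathbin{\gg\!=}u\mapsto b]=\bigvee_a[t\mapsto a]\wedge[t\gg u(a)\mapsto b]$, $[t\mapsto a]:=[t\mathbin{\gg\!=}\lambda a'.\mathrm{return}(\delta_a(a'))]$. Trace equivalence: $[\![m\sim_1m']\!]=\bigvee\{[t\mapsto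 a]:|A|\le\kappa,t\in TA,u,u'\colon A\to T1,u(a)=u'(a),m=t\mathbin{\gg\!=}u,m'=t\mathbin{\gg\!=}u'\}$; $[\![m\sim m']\!]$ is the join over $k\ge1$ and chains $m=m_1,\ldots,m_k=m'$ of $\bigwedge_{i<k}[\![m_i\sim_1m_{i+1}]\!]$ (just $[\![m\sim_1m']\!]$ for $k=1$); $m\sim_bm'$ iff $b\le[\![m\sim m']\!]$. $\mathrm{LB}_1T$ has frame the pointwise-ordered functions $w\colon T1\to\mathcal{O}(\mathrm{LB}_0T)$ with $b\wedge w(m_1)=b\wedge w(m_2)$ whenever $b$ complemented and $m_1\sim_bm_2$; the source map $\sigma\colon\mathrm{LB}_1T\to\mathrm{LB}_0T$ is $\sigma^{-1}(u)=\mathrm{const}_u$. *)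

theory Defs
  imports Main
begin

definition is_lub :: "'a set \<Rightarrow> ('a \<Rightarrow> 'a \<Rightarrow> bool) \<Rightarrow> 'a set \<Rightarrow> 'a \<Rightarrow> bool" where
  "is_lub X le S x \<longleftrightarrow> x \<in> X \<and> (\<forall>s\<in>S. le s x) \<and> (\<forall>y\<in>X. (\<forall>s\<in>S. le s y) \<longrightarrow> le x y)"

definition is_glb :: "'a set \<Rightarrow> ('a \<Rightarrow> 'a \<Rightarrow> bool) \<Rightarrow> 'a set \<Rightarrow> 'a \<Rightarrow> bool" where
  "is_glb X le S x \<longleftrightarrow> x \<in> X \<and> (\<forall>s\<in>S. le x s) \<and> (\<forall>y\<in>X. (\<forall>s\<in>S. le y s) \<longrightarrow> le y x)"

definition lub :: "'a set \<Rightarrow> ('a \<Rightarrow> 'a \<Rightarrow> bool) \<Rightarrow> 'a set \<Rightarrow> 'a" where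
  "lub X le S = (THE x. is_lub X le S x)"

definition glb :: "'a set \<Rightarrow> ('a \<Rightarrow> 'a \<Rightarrow> bool) \<Rightarrow> 'a set \<Rightarrow> 'a" where
  "glb X le S = (THE x. is_glb X le S x)"

definition meet2 :: "'a set \<Rightarrow> ('a \<Rightarrow> 'a \<Rightarrow> bool) \<Rightarrow> 'a \<Rightarrow> 'a \<Rightarrow> 'a" where
  "meet2 X le a b = glb X le {a, b}"

definition join2 :: "'a set \<Rightarrow> ('a \<Rightarrow> 'a \<Rightarrow> bool) \<Rightarrow> 'a \<Rightarrow> 'a \<Rightarrow> 'a" where
  "join2 X le a b = lub X le {a, b}"

definition ftop :: "'a set \<Rightarrow> ('a \<Rightarrow> 'a \<Rightarrow> bool) \<Rightarrow> 'a" where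
  "ftop X le = glb X le {}"

definition fbot :: "'a set \<Rightarrow> ('a \<Rightarrow> 'a \<Rightarrow> bool) \<Rightarrow> 'a" where
  "fbot X le = lub X le {}"

definition is_frame :: "'a set \<Rightarrow> ('a \<Rightarrow> 'a \<Rightarrow> bool) \<Rightarrow> bool" where
  "is_frame X le \<longleftrightarrow>
     (\<forall>x\<in>X. le x x) \<and>
     (\<forall>x\<in>X. \<forall>y\<in>X. le x y \<and> le y x \<longrightarrow> x = y) \<and>
     (\<forall>x\<in>X. \<forall>y\<in>X. \<forall>z\<in>X. le x y \<and> le y z \<longrightarrow> le x z) \<and>
     (\<forall>S. S \<subseteq> X \<longrightarrow> (\<exists>x. is_lub X le S x)) \<and>
     (\<forall>a\<in>X. \<forall>S. S \<subseteq> X \<longrightarrow> meet2 X le a (lub X le S) = lub X le ((\<lambda>s. meet2 X le a s) ` S))"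

definition frame_hom :: "'a set \<Rightarrow> ('a \<Rightarrow> 'a \<Rightarrow> bool) \<Rightarrow> 'b set \<Rightarrow> ('b \<Rightarrow> 'b \<Rightarrow> bool) \<Rightarrow> ('a \<Rightarrow> 'b) \<Rightarrow> bool" where
  "frame_hom X le Y le' \<phi> \<longleftrightarrow>
     (\<forall>x\<in>X. \<phi> x \<in> Y) \<and>
     \<phi> (ftop X le) = ftop Y le' \<and>
     (\<forall>a\<in>X. \<forall>b\<in>X. \<phi> (meet2 X le a b) = meet2 Y le' (\<phi> a) (\<phi> b)) \<and>
     (\<forall>S. S \<subseteq> X \<longrightarrow> \<phi> (lub X le S) = lub Y le' (\<phi> ` S))"

definition complemented :: "'a set \<Rightarrow> ('a \<Rightarrow> 'a \<Rightarrow> bool) \<Rightarrow> 'a \<Rightarrow> bool" where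
  "complemented X le b \<longleftrightarrow> b \<in> X \<and>
     (\<exists>c\<in>X. meet2 X le b c = fbot X le \<and> join2 X le b c = ftop X le)"

section \<open>Pushouts of frames (= pullbacks of locales)\<close>

definition frame_cocone ::
  "'a set \<Rightarrow> ('a \<Rightarrow> 'a \<Rightarrow> bool) \<Rightarrow> 'b set \<Rightarrow> ('b \<Rightarrow> 'b \<Rightarrow> bool) \<Rightarrow> 'c set \<Rightarrow> ('c \<Rightarrow> 'c \<Rightarrow> bool)
   \<Rightarrow> ('a \<Rightarrow> 'b) \<Rightarrow> ('a \<Rightarrow> 'c) \<Rightarrow> 'p set \<Rightarrow> ('p \<Rightarrow> 'p \<Rightarrow> bool) \<Rightarrow> ('b \<Rightarrow> 'p) \<Rightarrow> ('c \<Rightarrow> 'p) \<Rightarrow> bool" where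
  "frame_cocone A leA B leB C leC g1 g2 P leP i j \<longleftrightarrow>
     is_frame P leP \<and> frame_hom B leB P leP i \<and> frame_hom C leC P leP j \<and>
     (\<forall>x\<in>A. i (g1 x) = j (g2 x))"

definition frame_mediates ::
  "'b set \<Rightarrow> 'c set \<Rightarrow> 'p set \<Rightarrow> ('p \<Rightarrow> 'p \<Rightarrow> bool) \<Rightarrow> ('b \<Rightarrow> 'p) \<Rightarrow> ('c \<Rightarrow> 'p)
   \<Rightarrow> 'q set \<Rightarrow> ('q \<Rightarrow> 'q \<Rightarrow> bool) \<Rightarrow> ('b \<Rightarrow> 'q) \<Rightarrow> ('c \<Rightarrow> 'q) \<Rightarrow> bool" where
  "frame_mediates B C P leP i j Q leQ p q \<longleftrightarrow>
     (\<exists>r. frame_hom P leP Q leQ r \<and> (\<forall>y\<in>B. r (i y) = p y) \<and> (\<forall>z\<in>C. r (j z) = q z)) \<and>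
     (\<forall>r r'. frame_hom P leP Q leQ r \<and> (\<forall>y\<in>B. r (i y) = p y) \<and> (\<forall>z\<in>C. r (j z) = q z) \<and>
             frame_hom P leP Q leQ r' \<and> (\<forall>y\<in>B. r' (i y) = p y) \<and> (\<forall>z\<in>C. r' (j z) = q z)
             \<longrightarrow> (\<forall>x\<in>P. r x = r' x))"

definition fin_subsets :: "'g set \<Rightarrow> 'g set set" where
  "fin_subsets G = {S. S \<subseteq> G \<and> finite S}"

text \<open>A relation (S, C) stands for  /\S <= \/_{S' in C} /\S'.  The presented frame is the
  frame of downsets of the free meet-semilattice on G (finite subsets, ordered by
  reverse inclusion) that are saturated for the meet-stable closure of the relations.\<close>
definition pres_carrier :: "'g set \<Rightarrow> ('g set \<times> 'g set set) set \<Rightarrow> 'g set set set" where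
  "pres_carrier G R = {D. D \<subseteq> fin_subsets G \<and>
      (\<forall>S\<in>D. \<forall>S'\<in>fin_subsets G. S \<subseteq> S' \<longrightarrow> S' \<in> D) \<and>
      (\<forall>(S, C)\<in>R. \<forall>U\<in>fin_subsets G. (\<forall>S'\<in>C. U \<union> S' \<in> D) \<longrightarrow> U \<union> S \<in> D)}"

definition pres_gen :: "'g set \<Rightarrow> ('g set \<times> 'g set set) set \<Rightarrow> 'g \<Rightarrow> 'g set set" where
  "pres_gen G R g = \<Inter> {D \<in> pres_carrier G R. {g} \<in> D}"

section \<open>Monads on Set (restricted to subsets of a universe type 'i)\<close>

record ('i, 't) set_monad =
  Tm :: "'i set \<Rightarrow> 't set"
  ret :: "'i set \<Rightarrow> 'i \<Rightarrow> 't"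
  bnd :: "'i set \<Rightarrow> 'i set \<Rightarrow> 't \<Rightarrow> ('i \<Rightarrow> 't) \<Rightarrow> 't"

definition is_set_monad :: "('i, 't) set_monad \<Rightarrow> bool" where
  "is_set_monad M \<longleftrightarrow>
     (\<forall>A. \<forall>a\<in>A. ret M A a \<in> Tm M A) \<and>
     (\<forall>A B t u. t \<in> Tm M A \<and> (\<forall>a\<in>A. u a \<in> Tm M B) \<longrightarrow> bnd M A B t u \<in> Tm M B) \<and>
     (\<forall>A B t u u'. t \<in> Tm M A \<and> (\<forall>a\<in>A. u a = u' a) \<longrightarrow> bnd M A B t u = bnd M A B t u') \<and>
     (\<forall>A B a u. a \<in> A \<and> (\<forall>x\<in>A. u x \<in> Tm M B) \<longrightarrow> bnd M A B (ret M A a) u = u a) \<and>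
     (\<forall>A t. t \<in> Tm M A \<longrightarrow> bnd M A A t (ret M A) = t) \<and>
     (\<forall>A B C t u v. t \<in> Tm M A \<and> (\<forall>a\<in>A. u a \<in> Tm M B) \<and> (\<forall>b\<in>B. v b \<in> Tm M C) \<longrightarrow>
        bnd M B C (bnd M A B t u) v = bnd M A C t (\<lambda>a. bnd M B C (u a) v))"

text \<open>Ranked of rank kappa = |K|.\<close>
definition ranked :: "('i, 't) set_monad \<Rightarrow> 'k set \<Rightarrow> bool" where
  "ranked M K \<longleftrightarrow> (\<forall>A. \<forall>t\<in>Tm M A. \<exists>I t' f. (card_of I, card_of K) \<in> ordLess \<and> t' \<in> Tm M I \<and>
       (\<forall>i\<in>I. f i \<in> A) \<and> t = bnd M I A t' (\<lambda>i. ret M A (f i)))"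

text \<open>Here 1 = {c0} and 2 = {c0, c1} with 0 = c0 and 1 = c1.\<close>
definition mapsto :: "('i, 't) set_monad \<Rightarrow> 'i \<Rightarrow> 'i \<Rightarrow> 'i set \<Rightarrow> 't \<Rightarrow> 'i \<Rightarrow> 't" where
  "mapsto M c0 c1 A t a = bnd M A {c0, c1} t (\<lambda>a'. ret M {c0, c1} (if a' = a then c1 else c0))"

definition lb0_rels :: "('i, 't) set_monad \<Rightarrow> 'i \<Rightarrow> 'i \<Rightarrow> ('t set \<times> 't set set) set" where
  "lb0_rels M c0 c1 =
     {({mapsto M c0 c1 A t a, mapsto M c0 c1 A t a'}, {}) | A t a a'.
        t \<in> Tm M A \<and> a \<in> A \<and> a' \<in> A \<and> a \<noteq> a'}
   \<union> {({}, {{mapsto M c0 c1 A (bnd M A A t (\<lambda>_. ret M A a)) a}}) | A t a.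
        t \<in> Tm M A \<and> a \<in> A}
   \<union> {({mapsto M c0 c1 B (bnd M A B t u) b},
        {{mapsto M c0 c1 A t a, mapsto M c0 c1 B (bnd M A B t (\<lambda>_. u a)) b} | a. a \<in> A}) | A B t u b.
        t \<in> Tm M A \<and> (\<forall>a\<in>A. u a \<in> Tm M B) \<and> b \<in> B}
   \<union> {({mapsto M c0 c1 A t a, mapsto M c0 c1 B (bnd M A B t (\<lambda>_. u a)) b},
        {{mapsto M c0 c1 B (bnd M A B t u) b}}) | A B t u a b.
        t \<in> Tm M A \<and> (\<forall>x\<in>A. u x \<in> Tm M B) \<and> a \<in> A \<and> b \<in> B}"

text \<open>The frame O(LB_0 T), ordered by inclusion.\<close>
definition LB0 :: "('i, 't) set_monad \<Rightarrow> 'i \<Rightarrow> 'i \<Rightarrow> 't set set set" where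
  "LB0 M c0 c1 = pres_carrier (Tm M {c0, c1}) (lb0_rels M c0 c1)"

definition lb0_gen :: "('i, 't) set_monad \<Rightarrow> 'i \<Rightarrow> 'i \<Rightarrow> 't \<Rightarrow> 't set set" where
  "lb0_gen M c0 c1 b = pres_gen (Tm M {c0, c1}) (lb0_rels M c0 c1) b"

definition trace1 :: "('i, 't) set_monad \<Rightarrow> 'i \<Rightarrow> 'i \<Rightarrow> 'k set \<Rightarrow> 't \<Rightarrow> 't \<Rightarrow> 't set set" where
  "trace1 M c0 c1 K m m' = lub (LB0 M c0 c1) (\<subseteq>)
     {lb0_gen M c0 c1 (mapsto M c0 c1 A t a) | A t u u' a.
        (card_of A, card_of K) \<in> ordLeq \<and> t \<in> Tm M A \<and>
        (\<forall>x\<in>A. u x \<in> Tm M {c0}) \<and> (\<forall>x\<in>A. u' x \<in> Tm M {c0}) \<and>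
        a \<in> A \<and> u a = u' a \<and> m = bnd M A {c0} t u \<and> m' = bnd M A {c0} t u'}"

definition trace :: "('i, 't) set_monad \<Rightarrow> 'i \<Rightarrow> 'i \<Rightarrow> 'k set \<Rightarrow> 't \<Rightarrow> 't \<Rightarrow> 't set set" where
  "trace M c0 c1 K m m' = lub (LB0 M c0 c1) (\<subseteq>)
     {glb (LB0 M c0 c1) (\<subseteq>) {trace1 M c0 c1 K (ms i) (ms (Suc i)) | i. i < k} | k ms.
        1 \<le> k \<and> ms 0 = m \<and> ms k = m' \<and> (\<forall>i\<le>k. ms i \<in> Tm M {c0})}"

definition trace_equiv :: "('i, 't) set_monad \<Rightarrow> 'i \<Rightarrow> 'i \<Rightarrow> 'k set \<Rightarrow> 't set set \<Rightarrow> 't \<Rightarrow> 't \<Rightarrow> bool" where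
  "trace_equiv M c0 c1 K b m m' \<longleftrightarrow> b \<subseteq> trace M c0 c1 K m m'"

definition LB1 :: "('i, 't) set_monad \<Rightarrow> 'i \<Rightarrow> 'i \<Rightarrow> 'k set \<Rightarrow> ('t \<Rightarrow> 't set set) set" where
  "LB1 M c0 c1 K = {w. (\<forall>m\<in>Tm M {c0}. w m \<in> LB0 M c0 c1) \<and> (\<forall>m. m \<notin> Tm M {c0} \<longrightarrow> w m = undefined) \<and>
     (\<forall>b m1 m2. complemented (LB0 M c0 c1) (\<subseteq>) b \<and> m1 \<in> Tm M {c0} \<and> m2 \<in> Tm M {c0} \<and>
        trace_equiv M c0 c1 K b m1 m2 \<longrightarrow>
        meet2 (LB0 M c0 c1) (\<subseteq>) b (w m1) = meet2 (LB0 M c0 c1) (\<subseteq>) b (w m2))}"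

definition LB1_le :: "('i, 't) set_monad \<Rightarrow> 'i \<Rightarrow> ('t \<Rightarrow> 't set set) \<Rightarrow> ('t \<Rightarrow> 't set set) \<Rightarrow> bool" where
  "LB1_le M c0 w w' \<longleftrightarrow> (\<forall>m\<in>Tm M {c0}. w m \<subseteq> w' m)"

definition sigma_inv :: "('i, 't) set_monad \<Rightarrow> 'i \<Rightarrow> 't set set \<Rightarrow> ('t \<Rightarrow> 't set set)" where
  "sigma_inv M c0 u = (\<lambda>m. if m \<in> Tm M {c0} then u else undefined)"

definition pb_carrier :: "('i, 't) set_monad \<Rightarrow> 'i \<Rightarrow> 'i \<Rightarrow> 'k set \<Rightarrow> 'l set \<Rightarrow> ('l \<Rightarrow> 'l \<Rightarrow> bool)
    \<Rightarrow> ('t set set \<Rightarrow> 'l) \<Rightarrow> ('t \<Rightarrow> 'l) set" where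
  "pb_carrier M c0 c1 K OL leL finv = {h. (\<forall>m\<in>Tm M {c0}. h m \<in> OL) \<and> (\<forall>m. m \<notin> Tm M {c0} \<longrightarrow> h m = undefined) \<and>
     (\<forall>m1\<in>Tm M {c0}. \<forall>m2\<in>Tm M {c0}. \<forall>b. complemented (LB0 M c0 c1) (\<subseteq>) b \<and> trace_equiv M c0 c1 K b m1 m2 \<longrightarrow>
        meet2 OL leL (h m1) (finv b) = meet2 OL leL (h m2) (finv b))}"

definition pb_le :: "('i, 't) set_monad \<Rightarrow> 'i \<Rightarrow> ('l \<Rightarrow> 'l \<Rightarrow> bool) \<Rightarrow> ('t \<Rightarrow> 'l) \<Rightarrow> ('t \<Rightarrow> 'l) \<Rightarrow> bool" where
  "pb_le M c0 leL h h' \<longleftrightarrow> (\<forall>m\<in>Tm M {c0}. leL (h m) (h' m))"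

definition pb_inl :: "('i, 't) set_monad \<Rightarrow> 'i \<Rightarrow> 'l \<Rightarrow> ('t \<Rightarrow> 'l)" where
  "pb_inl M c0 x = (\<lambda>m. if m \<in> Tm M {c0} then x else undefined)"

definition pb_inr :: "('i, 't) set_monad \<Rightarrow> 'i \<Rightarrow> ('t set set \<Rightarrow> 'l) \<Rightarrow> ('t \<Rightarrow> 't set set) \<Rightarrow> ('t \<Rightarrow> 'l)" where
  "pb_inr M c0 finv w = (\<lambda>m. if m \<in> Tm M {c0} then finv (w m) else undefined)"

end

theory Submission
  imports Defs
begin

locale frm =
  fixes X :: "'a set" and le :: "'a \<Rightarrow> 'a \<Rightarrow> bool"
  assumes fr: "is_frame X le"
begin

lemma parts1:  "\<forall>x\<in>X. le x x"
  using fr unfolding is_frame_def by (elim conjE) assumption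
lemma parts2:  "\<forall>x\<in>X. \<forall>y\<in>X. le x y \<and> le y x \<longrightarrow> x = y"
  using fr unfolding is_frame_def by (elim conjE) assumption
lemma parts3:  "\<forall>x\<in>X. \<forall>y\<in>X. \<forall>z\<in>X. le x y \<and> le y z \<longrightarrow> le x z"
  using fr unfolding is_frame_def by (elim conjE) assumption
lemma parts4:  "\<forall>S. S \<subseteq> X \<longrightarrow> (\<exists>x. is_lub X le S x)"
  using fr unfolding is_frame_def by (elim conjE) assumption
lemma parts5:  "\<forall>a\<in>X. \<forall>S. S \<subseteq> X \<longrightarrow> meet2 X le a (lub X le S) = lub X le ((\<lambda>s. meet2 X le a s) ` S)"
  using fr unfolding is_frame_def by (elim conjE) assumption

lemma refl: "x \<in> X \<Longrightarrow> le x x" using parts1 by blast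
lemma antisym: "x \<in> X \<Longrightarrow> y \<in> X \<Longrightarrow> le x y \<Longrightarrow> le y x \<Longrightarrow> x = y"
  using parts2 by blast
lemma trans: "x \<in> X \<Longrightarrow> y \<in> X \<Longrightarrow> z \<in> X \<Longrightarrow> le x y \<Longrightarrow> le y z \<Longrightarrow> le x z"
  using parts3 by blast
lemma lub_ex: "S \<subseteq> X \<Longrightarrow> \<exists>x. is_lub X le S x"
  using parts4 by blast
lemma distrib: "a \<in> X \<Longrightarrow> S \<subseteq> X \<Longrightarrow> meet2 X le a (lub X le S) = lub X le ((\<lambda>s. meet2 X le a s) ` S)"
  using parts5 by blast

lemma lub_eq: "is_lub X le S x \<Longrightarrow> lub X le S = x"
  unfolding lub_def
  by (rule the_equality) (auto simp: is_lub_def intro: antisym)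

lemma glb_eq: "is_glb X le S x \<Longrightarrow> glb X le S = x"
  unfolding glb_def
  by (rule the_equality) (auto simp: is_glb_def intro: antisym)

lemma lub_is: "S \<subseteq> X \<Longrightarrow> is_lub X le S (lub X le S)"
  using lub_ex lub_eq by metis

lemma lub_in: "S \<subseteq> X \<Longrightarrow> lub X le S \<in> X"
  using lub_is[of S] unfolding is_lub_def by blast
lemma lub_upper: "S \<subseteq> X \<Longrightarrow> s \<in> S \<Longrightarrow> le s (lub X le S)"
  using lub_is[of S] unfolding is_lub_def by blast
lemma lub_least: "S \<subseteq> X \<Longrightarrow> y \<in> X \<Longrightarrow> (\<And>s. s \<in> S \<Longrightarrow> le s y) \<Longrightarrow> le (lub X le S) y"
  using lub_is[of S] unfolding is_lub_def by blast

lemma glb_is: "S \<subseteq> X \<Longrightarrow> is_glb X le S (glb X le S)"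
proof -
  assume S: "S \<subseteq> X"
  let ?L = "{y\<in>X. \<forall>s\<in>S. le y s}"
  have "is_glb X le S (lub X le ?L)"
    unfolding is_glb_def
    using S by (auto intro!: lub_in lub_least lub_upper)
  thus ?thesis using glb_eq by metis
qed

lemma glb_in: "S \<subseteq> X \<Longrightarrow> glb X le S \<in> X"
  using glb_is[of S] unfolding is_glb_def by blast
lemma glb_lower: "S \<subseteq> X \<Longrightarrow> s \<in> S \<Longrightarrow> le (glb X le S) s"
  using glb_is[of S] unfolding is_glb_def by blast
lemma glb_greatest: "S \<subseteq> X \<Longrightarrow> y \<in> X \<Longrightarrow> (\<And>s. s \<in> S \<Longrightarrow> le y s) \<Longrightarrow> le y (glb X le S)"
  using glb_is[of S] unfolding is_glb_def by blast

lemma lub_eqI: "S \<subseteq> X \<Longrightarrow> x \<in> X \<Longrightarrow> (\<And>s. s \<in> S \<Longrightarrow> le s x) \<Longrightarrow> (\<And>y. y \<in> X \<Longrightarrow> (\<And>s. s \<in> S \<Longrightarrow> le s y) \<Longrightarrow> le x y) \<Longrightarrow> lub X le S = x"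
  by (rule lub_eq) (auto simp: is_lub_def)

lemma lub_mono: "S \<subseteq> T \<Longrightarrow> T \<subseteq> X \<Longrightarrow> le (lub X le S) (lub X le T)"
  by (rule lub_least) (auto intro: lub_in lub_upper)

lemma meet_in: "a \<in> X \<Longrightarrow> b \<in> X \<Longrightarrow> meet2 X le a b \<in> X"
  unfolding meet2_def by (rule glb_in) auto
lemma meet_le1: "a \<in> X \<Longrightarrow> b \<in> X \<Longrightarrow> le (meet2 X le a b) a"
  unfolding meet2_def by (rule glb_lower) auto
lemma meet_le2: "a \<in> X \<Longrightarrow> b \<in> X \<Longrightarrow> le (meet2 X le a b) b"
  unfolding meet2_def by (rule glb_lower) auto
lemma meet_greatest: "a \<in> X \<Longrightarrow> b \<in> X \<Longrightarrow> y \<in> X \<Longrightarrow> le y a \<Longrightarrow> le y b \<Longrightarrow> le y (meet2 X le a b)"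
  unfolding meet2_def by (rule glb_greatest) auto
lemma meet_comm: "meet2 X le a b = meet2 X le b a"
  unfolding meet2_def by (simp add: insert_commute)
lemma meet_eqI: "a \<in> X \<Longrightarrow> b \<in> X \<Longrightarrow> x \<in> X \<Longrightarrow> le x a \<Longrightarrow> le x b \<Longrightarrow> (\<And>y. y \<in> X \<Longrightarrow> le y a \<Longrightarrow> le y b \<Longrightarrow> le y x) \<Longrightarrow> meet2 X le a b = x"
  unfolding meet2_def by (rule glb_eq) (auto simp: is_glb_def)
lemma meet_absorb: "a \<in> X \<Longrightarrow> b \<in> X \<Longrightarrow> le a b \<Longrightarrow> meet2 X le a b = a"
  by (rule meet_eqI) (auto intro: refl)
lemma meet_mono: "a \<in> X \<Longrightarrow> b \<in> X \<Longrightarrow> a' \<in> X \<Longrightarrow> b' \<in> X \<Longrightarrow> le a a' \<Longrightarrow> le b b' \<Longrightarrow> le (meet2 X le a b) (meet2 X le a' b')"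
proof -
  assume h: "a \<in> X" "b \<in> X" "a' \<in> X" "b' \<in> X" "le a a'" "le b b'"
  have "le (meet2 X le a b) a'" using h meet_le1[of a b] meet_in[of a b] trans[of _ a a'] by blast
  moreover have "le (meet2 X le a b) b'" using h meet_le2[of a b] meet_in[of a b] trans[of _ b b'] by blast
  ultimately show ?thesis using h by (simp add: meet_greatest meet_in)
qed

lemma distrib2: "a \<in> X \<Longrightarrow> S \<subseteq> X \<Longrightarrow> meet2 X le (lub X le S) a = lub X le ((\<lambda>s. meet2 X le s a) ` S)"
  using distrib by (simp add: meet_comm)

lemma top_in: "ftop X le \<in> X" unfolding ftop_def by (rule glb_in) auto
lemma top_ge: "x \<in> X \<Longrightarrow> le x (ftop X le)" unfolding ftop_def by (rule glb_greatest) auto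
lemma bot_in: "fbot X le \<in> X" unfolding fbot_def by (rule lub_in) auto
lemma bot_le: "x \<in> X \<Longrightarrow> le (fbot X le) x" unfolding fbot_def by (rule lub_least) auto
lemma meet_top: "a \<in> X \<Longrightarrow> meet2 X le a (ftop X le) = a"
  by (simp add: meet_absorb top_ge top_in)
lemma top_meet: "a \<in> X \<Longrightarrow> meet2 X le (ftop X le) a = a"
  using meet_comm meet_top by metis

lemma join_in: "a \<in> X \<Longrightarrow> b \<in> X \<Longrightarrow> join2 X le a b \<in> X"
  unfolding join2_def by (rule lub_in) auto
lemma join_ge1: "a \<in> X \<Longrightarrow> b \<in> X \<Longrightarrow> le a (join2 X le a b)"
  unfolding join2_def by (rule lub_upper) auto
lemma join_ge2: "a \<in> X \<Longrightarrow> b \<in> X \<Longrightarrow> le b (join2 X le a b)"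
  unfolding join2_def by (rule lub_upper) auto
lemma join_least: "a \<in> X \<Longrightarrow> b \<in> X \<Longrightarrow> y \<in> X \<Longrightarrow> le a y \<Longrightarrow> le b y \<Longrightarrow> le (join2 X le a b) y"
  unfolding join2_def by (rule lub_least) auto
lemma join_distrib: "a \<in> X \<Longrightarrow> b \<in> X \<Longrightarrow> c \<in> X \<Longrightarrow> meet2 X le a (join2 X le b c) = join2 X le (meet2 X le a b) (meet2 X le a c)"
  unfolding join2_def using distrib[of a "{b,c}"] by simp

lemma meet_lub_lub_le:
  assumes "S \<subseteq> X" "S' \<subseteq> X" "z \<in> X" "\<And>s s'. s \<in> S \<Longrightarrow> s' \<in> S' \<Longrightarrow> le (meet2 X le s s') z"
  shows "le (meet2 X le (lub X le S) (lub X le S')) z"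
proof -
  have "meet2 X le (lub X le S) (lub X le S') = lub X le ((\<lambda>s'. meet2 X le (lub X le S) s') ` S')"
    using assms by (simp add: distrib lub_in)
  also have "le \<dots> z"
  proof (rule lub_least)
    show "(\<lambda>s'. meet2 X le (lub X le S) s') ` S' \<subseteq> X" using assms by (auto intro: meet_in lub_in)
    fix y assume "y \<in> (\<lambda>s'. meet2 X le (lub X le S) s') ` S'"
    then obtain s' where s': "s' \<in> S'" "y = meet2 X le (lub X le S) s'" by auto
    have "y = lub X le ((\<lambda>s. meet2 X le s s') ` S)" using s' assms by (simp add: distrib2 subsetD)
    also have "le \<dots> z" using assms s' by (intro lub_least) (auto intro: meet_in)
    finally show "le y z" .
  qed (use assms in auto)
  finally show ?thesis .
qed

lemma le_lub_complete:
  "S \<subseteq> X \<Longrightarrow> T \<subseteq> X \<Longrightarrow> (\<And>s. s \<in> S \<Longrightarrow> \<exists>t\<in>T. le s t) \<Longrightarrow> le (lub X le S) (lub X le T)"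
proof -
  assume h: "S \<subseteq> X" "T \<subseteq> X" "\<And>s. s \<in> S \<Longrightarrow> \<exists>t\<in>T. le s t"
  show ?thesis
  proof (rule lub_least[OF h(1) lub_in[OF h(2)]])
    fix s assume s: "s \<in> S"
    then obtain t where t: "t \<in> T" "le s t" using h(3) by blast
    have "le t (lub X le T)" using t h lub_upper by blast
    thus "le s (lub X le T)" using t s h trans[of s t "lub X le T"] lub_in[OF h(2)] by blast
  qed
qed

lemma complemented_meet:
  assumes a: "complemented X le a" and b: "complemented X le b"
  shows "complemented X le (meet2 X le a b)"
proof -
  from a obtain a' where a': "a \<in> X" "a' \<in> X" "meet2 X le a a' = fbot X le" "join2 X le a a' = ftop X le"
    unfolding complemented_def by blast
  from b obtain b' where b': "b \<in> X" "b' \<in> X" "meet2 X le b b' = fbot X le" "join2 X le b b' = ftop X le"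
    unfolding complemented_def by blast
  let ?m = "meet2 X le a b" and ?c = "join2 X le a' b'"
  have m: "?m \<in> X" and c: "?c \<in> X" using a' b' by (auto intro: meet_in join_in)
  have "meet2 X le ?m ?c = join2 X le (meet2 X le ?m a') (meet2 X le ?m b')"
    using a' b' m by (simp add: join_distrib)
  also have "\<dots> = fbot X le"
  proof (rule antisym)
    have "le (meet2 X le ?m a') (fbot X le)"
      using a' b' by (metis meet_le1 meet_in meet_mono refl)
    moreover have "le (meet2 X le ?m b') (fbot X le)"
      using a' b' by (metis meet_le2 meet_in meet_mono refl)
    ultimately show "le (join2 X le (meet2 X le ?m a') (meet2 X le ?m b')) (fbot X le)"
      using a' b' m by (intro join_least) (auto intro: meet_in bot_in)
  qed (use a' b' m in \<open>auto intro: meet_in join_in bot_in bot_le\<close>)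
  finally have 1: "meet2 X le ?m ?c = fbot X le" .
  let ?j = "join2 X le ?m ?c"
  have j: "?j \<in> X" using m c by (rule join_in)
  have ac: "join2 X le a ?c = ftop X le"
    using a' b' c by (metis antisym join_ge1 join_in join_least top_ge top_in trans join_ge2)
  have bc: "join2 X le b ?c = ftop X le"
    using a' b' c by (metis antisym join_ge1 join_in join_least top_ge top_in trans join_ge2)
  have "ftop X le = meet2 X le (join2 X le a ?c) (join2 X le b ?c)"
    using ac bc top_in by (simp add: meet_top)
  also have "\<dots> = join2 X le (meet2 X le (join2 X le a ?c) b) (meet2 X le (join2 X le a ?c) ?c)"
    using a' b' c by (simp add: join_distrib join_in)
  also have "le \<dots> ?j"
  proof (rule join_least)
    have "meet2 X le (join2 X le a ?c) b = meet2 X le b (join2 X le a ?c)" by (rule meet_comm)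
    also have "\<dots> = join2 X le (meet2 X le b a) (meet2 X le b ?c)" using a' b' c by (simp add: join_distrib)
    also have "le \<dots> ?j"
    proof (rule join_least)
      show "le (meet2 X le b a) ?j" using a' b' c m j join_ge1[OF m c] by (simp add: meet_comm[of b a])
      have "le (meet2 X le b ?c) ?c" using b'(1) c by (rule meet_le2)
      moreover have "le ?c ?j" using m c by (rule join_ge2)
      ultimately show "le (meet2 X le b ?c) ?j" using trans[of "meet2 X le b ?c" ?c ?j] b' c j meet_in by blast
    qed (use a' b' c j in \<open>auto intro: meet_in\<close>)
    finally show "le (meet2 X le (join2 X le a ?c) b) ?j" .
    show "le (meet2 X le (join2 X le a ?c) ?c) ?j"
      using a' b' c m by (meson join_ge2 join_in meet_in meet_le2 trans)
  qed (use a' b' c m j in \<open>auto intro: meet_in join_in\<close>)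
  finally have 2: "?j = ftop X le" using j top_in top_ge antisym by metis
  show ?thesis unfolding complemented_def using m c 1 2 by blast
qed

end

lemma lub_eq_gen: "(\<And>x y. x \<in> X \<Longrightarrow> y \<in> X \<Longrightarrow> le x y \<Longrightarrow> le y x \<Longrightarrow> x = y) \<Longrightarrow> is_lub X le S x \<Longrightarrow> lub X le S = x"
  unfolding lub_def by (rule the_equality) (auto simp: is_lub_def)
lemma glb_eq_gen: "(\<And>x y. x \<in> X \<Longrightarrow> y \<in> X \<Longrightarrow> le x y \<Longrightarrow> le y x \<Longrightarrow> x = y) \<Longrightarrow> is_glb X le S x \<Longrightarrow> glb X le S = x"
  unfolding glb_def by (rule the_equality) (auto simp: is_glb_def)

locale fhom = A: frm X le + B: frm Y le' for X le Y le' +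
  fixes \<phi> assumes hom: "frame_hom X le Y le' \<phi>"
begin
lemma hom_in: "x \<in> X \<Longrightarrow> \<phi> x \<in> Y" using hom unfolding frame_hom_def by blast
lemma hom_top: "\<phi> (ftop X le) = ftop Y le'" using hom unfolding frame_hom_def by blast
lemma hom_meet: "a \<in> X \<Longrightarrow> b \<in> X \<Longrightarrow> \<phi> (meet2 X le a b) = meet2 Y le' (\<phi> a) (\<phi> b)"
  using hom unfolding frame_hom_def by blast
lemma hom_lub: "S \<subseteq> X \<Longrightarrow> \<phi> (lub X le S) = lub Y le' (\<phi> ` S)"
  using hom unfolding frame_hom_def by blast
lemma hom_mono: "a \<in> X \<Longrightarrow> b \<in> X \<Longrightarrow> le a b \<Longrightarrow> le' (\<phi> a) (\<phi> b)"
  by (metis A.meet_absorb B.meet_le2 hom_in hom_meet)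
lemma hom_bot: "\<phi> (fbot X le) = fbot Y le'"
  unfolding fbot_def using hom_lub[of "{}"] by simp
end

definition pw_le :: "'m set \<Rightarrow> ('a \<Rightarrow> 'a \<Rightarrow> bool) \<Rightarrow> ('m \<Rightarrow> 'a) \<Rightarrow> ('m \<Rightarrow> 'a) \<Rightarrow> bool" where
  "pw_le I le h h' \<longleftrightarrow> (\<forall>m\<in>I. le (h m) (h' m))"
definition pw_lub :: "'m set \<Rightarrow> 'a set \<Rightarrow> ('a \<Rightarrow> 'a \<Rightarrow> bool) \<Rightarrow> ('m \<Rightarrow> 'a) set \<Rightarrow> ('m \<Rightarrow> 'a)" where
  "pw_lub I Y le S = (\<lambda>m. if m \<in> I then lub Y le ((\<lambda>h. h m) ` S) else undefined)"
definition pw_meet :: "'m set \<Rightarrow> 'a set \<Rightarrow> ('a \<Rightarrow> 'a \<Rightarrow> bool) \<Rightarrow> ('m \<Rightarrow> 'a) \<Rightarrow> ('m \<Rightarrow> 'a) \<Rightarrow> ('m \<Rightarrow> 'a)" where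
  "pw_meet I Y le h h' = (\<lambda>m. if m \<in> I then meet2 Y le (h m) (h' m) else undefined)"
definition pw_top :: "'m set \<Rightarrow> 'a set \<Rightarrow> ('a \<Rightarrow> 'a \<Rightarrow> bool) \<Rightarrow> ('m \<Rightarrow> 'a)" where
  "pw_top I Y le = (\<lambda>m. if m \<in> I then ftop Y le else undefined)"
definition pw_const :: "'m set \<Rightarrow> 'a \<Rightarrow> ('m \<Rightarrow> 'a)" where
  "pw_const I x = (\<lambda>m. if m \<in> I then x else undefined)"

locale pwf = Y: frm Y le for Y le +
  fixes I :: "'m set" and F :: "('m \<Rightarrow> 'a) set"
  assumes F_ext: "\<And>h. h \<in> F \<Longrightarrow> (\<forall>m\<in>I. h m \<in> Y) \<and> (\<forall>m. m \<notin> I \<longrightarrow> h m = undefined)"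
    and lubc: "\<And>S. S \<subseteq> F \<Longrightarrow> pw_lub I Y le S \<in> F"
    and meetc: "\<And>h h'. h \<in> F \<Longrightarrow> h' \<in> F \<Longrightarrow> pw_meet I Y le h h' \<in> F"
    and topc: "pw_top I Y le \<in> F"
begin

lemma F_val: "h \<in> F \<Longrightarrow> m \<in> I \<Longrightarrow> h m \<in> Y" using F_ext by blast
lemma F_out: "h \<in> F \<Longrightarrow> m \<notin> I \<Longrightarrow> h m = undefined" using F_ext by blast

lemma F_eqI: "h \<in> F \<Longrightarrow> h' \<in> F \<Longrightarrow> (\<And>m. m \<in> I \<Longrightarrow> h m = h' m) \<Longrightarrow> h = h'"
  using F_out by (intro ext) metis

lemma pw_antisym: "h \<in> F \<Longrightarrow> h' \<in> F \<Longrightarrow> pw_le I le h h' \<Longrightarrow> pw_le I le h' h \<Longrightarrow> h = h'"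
  unfolding pw_le_def by (rule F_eqI) (auto intro: Y.antisym F_val)

lemma img_sub: "S \<subseteq> F \<Longrightarrow> m \<in> I \<Longrightarrow> (\<lambda>h. h m) ` S \<subseteq> Y" using F_val by blast

lemma pw_is_lub: "S \<subseteq> F \<Longrightarrow> is_lub F (pw_le I le) S (pw_lub I Y le S)"
  unfolding is_lub_def pw_le_def
proof (intro conjI ballI impI)
  assume S: "S \<subseteq> F"
  show "pw_lub I Y le S \<in> F" using S lubc by blast
  fix s m assume "s \<in> S" "m \<in> I"
  then show "le (s m) (pw_lub I Y le S m)" using S unfolding pw_lub_def
    by (simp add: Y.lub_upper img_sub)
next
  fix y m assume S: "S \<subseteq> F" and y: "y \<in> F" and ub: "\<forall>s\<in>S. \<forall>m\<in>I. le (s m) (y m)" and m: "m \<in> I"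
  show "le (pw_lub I Y le S m) (y m)" unfolding pw_lub_def using m S ub y
    by (auto intro!: Y.lub_least img_sub F_val)
qed

lemma pw_lub_eq: "S \<subseteq> F \<Longrightarrow> lub F (pw_le I le) S = pw_lub I Y le S"
  by (rule lub_eq_gen[OF pw_antisym pw_is_lub])

lemma pw_is_glb: "h \<in> F \<Longrightarrow> h' \<in> F \<Longrightarrow> is_glb F (pw_le I le) {h, h'} (pw_meet I Y le h h')"
  unfolding is_glb_def pw_le_def pw_meet_def using meetc[of h h', unfolded pw_meet_def]
  by (auto intro: Y.meet_le1 Y.meet_le2 Y.meet_greatest F_val)

lemma pw_meet_eq: "h \<in> F \<Longrightarrow> h' \<in> F \<Longrightarrow> meet2 F (pw_le I le) h h' = pw_meet I Y le h h'"
  unfolding meet2_def by (rule glb_eq_gen[OF pw_antisym pw_is_glb])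

lemma pw_top_eq: "ftop F (pw_le I le) = pw_top I Y le"
  unfolding ftop_def
  by (rule glb_eq_gen[OF pw_antisym]) (use topc in \<open>auto simp: is_glb_def pw_le_def pw_top_def intro: Y.top_ge F_val\<close>)

lemma pw_is_frame: "is_frame F (pw_le I le)"
  unfolding is_frame_def
proof (intro conjI ballI allI impI)
  fix x assume "x \<in> F" then show "pw_le I le x x" unfolding pw_le_def by (auto intro: Y.refl F_val)
next
  fix x y assume "x \<in> F" "y \<in> F" "pw_le I le x y \<and> pw_le I le y x" then show "x = y"
    using pw_antisym by blast
next
  fix x y z assume "x \<in> F" "y \<in> F" "z \<in> F" "pw_le I le x y \<and> pw_le I le y z" then show "pw_le I le x z"
    unfolding pw_le_def by (meson F_val Y.trans)
next
  fix S assume "S \<subseteq> F" then show "\<exists>x. is_lub F (pw_le I le) S x" using pw_is_lub by blast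
next
  fix a S assume a: "a \<in> F" and S: "S \<subseteq> F"
  have im: "(\<lambda>s. meet2 F (pw_le I le) a s) ` S = (\<lambda>s. pw_meet I Y le a s) ` S"
    using S a pw_meet_eq by (auto intro!: image_cong)
  have sub: "(\<lambda>s. pw_meet I Y le a s) ` S \<subseteq> F" using S a meetc by blast
  show "meet2 F (pw_le I le) a (lub F (pw_le I le) S) = lub F (pw_le I le) ((\<lambda>s. meet2 F (pw_le I le) a s) ` S)"
    unfolding im pw_lub_eq[OF S] pw_lub_eq[OF sub] pw_meet_eq[OF a lubc[OF S]]
  proof (rule ext)
    fix m show "pw_meet I Y le a (pw_lub I Y le S) m = pw_lub I Y le (pw_meet I Y le a ` S) m"
    proof (cases "m \<in> I")
      case True
      have "(\<lambda>h. h m) ` pw_meet I Y le a ` S = (\<lambda>x. meet2 Y le (a m) x) ` ((\<lambda>h. h m) ` S)"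
        using True unfolding pw_meet_def by (auto simp: image_image)
      then show ?thesis using True Y.distrib[OF F_val[OF a True] img_sub[OF S True]]
        unfolding pw_meet_def pw_lub_def by simp
    qed (simp add: pw_meet_def pw_lub_def)
  qed
qed

sublocale F: frm F "pw_le I le" by unfold_locales (rule pw_is_frame)

end

definition jcl :: "'g set \<Rightarrow> ('g set \<times> 'g set set) set \<Rightarrow> 'g set set \<Rightarrow> 'g set set" where
  "jcl G R A = \<Inter> {D \<in> pres_carrier G R. A \<subseteq> D}"

definition upcl :: "'g set \<Rightarrow> 'g set set \<Rightarrow> bool" where
  "upcl G A \<longleftrightarrow> A \<subseteq> fin_subsets G \<and> (\<forall>S\<in>A. \<forall>S'\<in>fin_subsets G. S \<subseteq> S' \<longrightarrow> S' \<in> A)"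

locale pres =
  fixes G :: "'g set" and R :: "('g set \<times> 'g set set) set"
  assumes wf: "\<And>S C. (S, C) \<in> R \<Longrightarrow> S \<in> fin_subsets G"
begin

abbreviation "PC \<equiv> pres_carrier G R"
abbreviation "FS \<equiv> fin_subsets G"

lemma FS_Un: "A \<in> FS \<Longrightarrow> B \<in> FS \<Longrightarrow> A \<union> B \<in> FS"
  unfolding fin_subsets_def by auto

lemma PC_sub: "D \<in> PC \<Longrightarrow> D \<subseteq> FS" unfolding pres_carrier_def by blast
lemma PC_up: "D \<in> PC \<Longrightarrow> S \<in> D \<Longrightarrow> S' \<in> FS \<Longrightarrow> S \<subseteq> S' \<Longrightarrow> S' \<in> D"
  unfolding pres_carrier_def by blast
lemma PC_sat: "D \<in> PC \<Longrightarrow> (S, C) \<in> R \<Longrightarrow> U \<in> FS \<Longrightarrow> (\<And>S'. S' \<in> C \<Longrightarrow> U \<union> S' \<in> D) \<Longrightarrow> U \<union> S \<in> D"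
  unfolding pres_carrier_def by (drule CollectD, elim conjE, drule bspec, assumption, simp)
lemma PC_I: "D \<subseteq> FS \<Longrightarrow> (\<And>S S'. S \<in> D \<Longrightarrow> S' \<in> FS \<Longrightarrow> S \<subseteq> S' \<Longrightarrow> S' \<in> D) \<Longrightarrow>
   (\<And>S C U. (S, C) \<in> R \<Longrightarrow> U \<in> FS \<Longrightarrow> (\<And>S'. S' \<in> C \<Longrightarrow> U \<union> S' \<in> D) \<Longrightarrow> U \<union> S \<in> D) \<Longrightarrow> D \<in> PC"
  unfolding pres_carrier_def by (auto simp: Ball_def)
lemma PC_upcl: "D \<in> PC \<Longrightarrow> upcl G D"
  unfolding upcl_def using PC_sub PC_up by blast

lemma FS_in: "FS \<in> PC"
  by (rule PC_I) (auto intro: FS_Un wf)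

lemma Inter_in: "\<D> \<subseteq> PC \<Longrightarrow> \<D> \<noteq> {} \<Longrightarrow> \<Inter>\<D> \<in> PC"
proof (rule PC_I)
  assume D: "\<D> \<subseteq> PC" "\<D> \<noteq> {}"
  then show "\<Inter>\<D> \<subseteq> FS" using PC_sub by blast
  show "\<And>S S'. S \<in> \<Inter> \<D> \<Longrightarrow> S' \<in> FS \<Longrightarrow> S \<subseteq> S' \<Longrightarrow> S' \<in> \<Inter> \<D>"
    using D PC_up by blast
  show "\<And>S C U. (S, C) \<in> R \<Longrightarrow> U \<in> FS \<Longrightarrow> (\<And>S'. S' \<in> C \<Longrightarrow> U \<union> S' \<in> \<Inter> \<D>) \<Longrightarrow> U \<union> S \<in> \<Inter> \<D>"
  proof -
    fix S C U assume SC: "(S, C) \<in> R" and U: "U \<in> FS" and h: "\<And>S'. S' \<in> C \<Longrightarrow> U \<union> S' \<in> \<Inter> \<D>"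
    show "U \<union> S \<in> \<Inter> \<D>"
    proof
      fix D assume "D \<in> \<D>"
      then show "U \<union> S \<in> D" using PC_sat[of D S C U] SC U h D(1) by blast
    qed
  qed
qed

lemma jcl_in: "A \<subseteq> FS \<Longrightarrow> jcl G R A \<in> PC"
  unfolding jcl_def using FS_in by (intro Inter_in) auto
lemma jcl_sup: "A \<subseteq> jcl G R A" unfolding jcl_def by blast
lemma jcl_least: "D \<in> PC \<Longrightarrow> A \<subseteq> D \<Longrightarrow> jcl G R A \<subseteq> D" unfolding jcl_def by blast
lemma jcl_id: "D \<in> PC \<Longrightarrow> jcl G R D = D" using jcl_sup jcl_least by blast
lemma jcl_mono: "A \<subseteq> B \<Longrightarrow> B \<subseteq> FS \<Longrightarrow> jcl G R A \<subseteq> jcl G R B"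
  using jcl_least jcl_in jcl_sup by (meson order_trans)

lemma shift_in:
  assumes D: "D \<in> PC" and W: "W \<subseteq> FS"
  shows "{x \<in> FS. \<forall>V\<in>W. x \<union> V \<in> D} \<in> PC"
proof (rule PC_I)
  show "{x \<in> FS. \<forall>V\<in>W. x \<union> V \<in> D} \<subseteq> FS" by blast
next
  fix S S' assume "S \<in> {x \<in> FS. \<forall>V\<in>W. x \<union> V \<in> D}" "S' \<in> FS" "S \<subseteq> S'"
  then show "S' \<in> {x \<in> FS. \<forall>V\<in>W. x \<union> V \<in> D}"
  proof (intro CollectI conjI ballI)
    assume h: "S \<in> {x \<in> FS. \<forall>V\<in>W. x \<union> V \<in> D}" "S' \<in> FS" "S \<subseteq> S'"
    show "S' \<in> FS" by fact
    fix V assume V: "V \<in> W"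
    have "S \<union> V \<in> D" using h V by blast
    moreover have "S' \<union> V \<in> FS" using h(2) V W FS_Un by blast
    moreover have "S \<union> V \<subseteq> S' \<union> V" using h(3) by blast
    ultimately show "S' \<union> V \<in> D" using PC_up[OF D] by blast
  qed
next
  fix S C U assume SC: "(S, C) \<in> R" and U: "U \<in> FS" and h: "\<And>S'. S' \<in> C \<Longrightarrow> U \<union> S' \<in> {x \<in> FS. \<forall>V\<in>W. x \<union> V \<in> D}"
  have "U \<union> S \<in> FS" using U wf[OF SC] FS_Un by blast
  moreover have "\<forall>V\<in>W. U \<union> S \<union> V \<in> D"
  proof
    fix V assume V: "V \<in> W"
    have "(U \<union> V) \<union> S \<in> D"
    proof (rule PC_sat[OF D SC])
      show "U \<union> V \<in> FS" using U V W FS_Un by blast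
      fix S' assume "S' \<in> C"
      then have "U \<union> S' \<union> V \<in> D" using h V by blast
      then show "U \<union> V \<union> S' \<in> D" by (simp add: Un_ac)
    qed
    then show "U \<union> S \<union> V \<in> D" by (simp add: Un_ac)
  qed
  ultimately show "U \<union> S \<in> {x \<in> FS. \<forall>V\<in>W. x \<union> V \<in> D}" by blast
qed

lemma nucleus:
  assumes A: "upcl G A" and B: "upcl G B"
  shows "jcl G R A \<inter> jcl G R B \<subseteq> jcl G R (A \<inter> B)"
proof -
  let ?J = "jcl G R (A \<inter> B)"
  have AF: "A \<subseteq> FS" and BF: "B \<subseteq> FS" using A B unfolding upcl_def by auto
  have J: "?J \<in> PC" using AF by (intro jcl_in) auto
  let ?E1 = "{x \<in> FS. \<forall>V\<in>A. x \<union> V \<in> ?J}"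
  have E1: "?E1 \<in> PC" using shift_in[OF J AF] .
  have "B \<subseteq> ?E1"
  proof
    fix x assume x: "x \<in> B"
    have "\<forall>V\<in>A. x \<union> V \<in> A \<inter> B"
    proof
      fix V assume V: "V \<in> A"
      have xV: "x \<union> V \<in> FS" using x V AF BF FS_Un by blast
      have "x \<union> V \<in> A" using A V xV unfolding upcl_def by blast
      moreover have "x \<union> V \<in> B" using B x xV unfolding upcl_def by blast
      ultimately show "x \<union> V \<in> A \<inter> B" by blast
    qed
    then show "x \<in> ?E1" using x BF jcl_sup by blast
  qed
  then have jB: "jcl G R B \<subseteq> ?E1" using jcl_least E1 by blast
  have jBF: "jcl G R B \<subseteq> FS" using jcl_in[OF BF] PC_sub by blast
  let ?E2 = "{V \<in> FS. \<forall>x\<in>jcl G R B. V \<union> x \<in> ?J}"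
  have E2: "?E2 \<in> PC" using shift_in[OF J jBF] .
  have "A \<subseteq> ?E2"
  proof
    fix V assume V: "V \<in> A"
    have "\<forall>x\<in>jcl G R B. V \<union> x \<in> ?J"
    proof
      fix x assume "x \<in> jcl G R B"
      then have "x \<union> V \<in> ?J" using jB V by blast
      then show "V \<union> x \<in> ?J" by (simp add: Un_commute)
    qed
    then show "V \<in> ?E2" using V AF by blast
  qed
  then have jA: "jcl G R A \<subseteq> ?E2" using jcl_least E2 by blast
  show ?thesis
  proof
    fix x assume "x \<in> jcl G R A \<inter> jcl G R B"
    then have "x \<union> x \<in> ?J" using jA by blast
    then show "x \<in> ?J" by simp
  qed
qed

lemma PC_is_lub: "S \<subseteq> PC \<Longrightarrow> is_lub PC (\<subseteq>) S (jcl G R (\<Union>S))"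
proof -
  assume S: "S \<subseteq> PC"
  have U: "\<Union>S \<subseteq> FS" using S PC_sub by blast
  show ?thesis unfolding is_lub_def
  proof (intro conjI ballI impI)
    show "jcl G R (\<Union>S) \<in> PC" using U by (rule jcl_in)
    fix s assume "s \<in> S" then have "s \<subseteq> \<Union>S" by (rule Union_upper)
    then show "s \<subseteq> jcl G R (\<Union>S)" using jcl_sup[of "\<Union>S"] by (rule order_trans)
  next
    fix y assume y: "y \<in> PC" "\<forall>s\<in>S. s \<subseteq> y"
    then have "\<Union>S \<subseteq> y" by (intro Union_least) blast
    then show "jcl G R (\<Union>S) \<subseteq> y" using jcl_least y(1) by blast
  qed
qed

lemma PC_is_glb: "a \<in> PC \<Longrightarrow> b \<in> PC \<Longrightarrow> is_glb PC (\<subseteq>) {a, b} (a \<inter> b)"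
proof -
  assume a: "a \<in> PC" and b: "b \<in> PC"
  have "\<Inter>{a, b} \<in> PC" using a b by (intro Inter_in) auto
  then have "a \<inter> b \<in> PC" by simp
  then show ?thesis unfolding is_glb_def by blast
qed

lemma PC_lub: "S \<subseteq> PC \<Longrightarrow> lub PC (\<subseteq>) S = jcl G R (\<Union>S)"
  by (rule lub_eq_gen[OF subset_antisym PC_is_lub])

lemma PC_meet: "a \<in> PC \<Longrightarrow> b \<in> PC \<Longrightarrow> meet2 PC (\<subseteq>) a b = a \<inter> b"
  unfolding meet2_def by (rule glb_eq_gen[OF subset_antisym PC_is_glb])

lemma PC_frame: "is_frame PC (\<subseteq>)"
  unfolding is_frame_def
proof (intro conjI ballI allI impI)
  fix S assume "S \<subseteq> PC" then show "\<exists>x. is_lub PC (\<subseteq>) S x" using PC_is_lub by blast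
next
  fix a S assume a: "a \<in> PC" and S: "S \<subseteq> PC"
  have up: "upcl G (\<Union>S)" using S PC_upcl unfolding upcl_def by blast
  have im: "(\<lambda>s. meet2 PC (\<subseteq>) a s) ` S = (\<lambda>s. a \<inter> s) ` S" using a S PC_meet by (auto intro!: image_cong)
  have sub: "(\<lambda>s. a \<inter> s) ` S \<subseteq> PC" using a S Inter_in[of "{a, _}"] by auto
  have lubS: "jcl G R (\<Union>S) \<in> PC" using S PC_sub by (intro jcl_in) blast
  have "a \<inter> jcl G R (\<Union>S) = jcl G R (\<Union>((\<lambda>s. a \<inter> s) ` S))"
  proof
    have "a \<inter> jcl G R (\<Union>S) = jcl G R a \<inter> jcl G R (\<Union>S)" using a jcl_id by simp
    also have "\<dots> \<subseteq> jcl G R (a \<inter> \<Union>S)" using nucleus[OF PC_upcl[OF a] up] .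
    also have "a \<inter> \<Union>S = \<Union>((\<lambda>s. a \<inter> s) ` S)" by blast
    finally show "a \<inter> jcl G R (\<Union>S) \<subseteq> jcl G R (\<Union>((\<lambda>s. a \<inter> s) ` S))" .
    have "a \<inter> jcl G R (\<Union>S) \<in> PC" using Inter_in[of "{a, jcl G R (\<Union>S)}"] a lubS by auto
    moreover have "\<Union>((\<lambda>s. a \<inter> s) ` S) \<subseteq> a \<inter> jcl G R (\<Union>S)" using jcl_sup by blast
    ultimately show "jcl G R (\<Union>((\<lambda>s. a \<inter> s) ` S)) \<subseteq> a \<inter> jcl G R (\<Union>S)" by (rule jcl_least)
  qed
  then show "meet2 PC (\<subseteq>) a (lub PC (\<subseteq>) S) = lub PC (\<subseteq>) ((\<lambda>s. meet2 PC (\<subseteq>) a s) ` S)"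
    unfolding im PC_lub[OF S] PC_lub[OF sub] PC_meet[OF a lubS] .
qed auto

sublocale P: frm PC "(\<subseteq>)" by unfold_locales (rule PC_frame)

lemma PC_top: "ftop PC (\<subseteq>) = FS"
  unfolding ftop_def by (rule glb_eq_gen) (auto simp: is_glb_def FS_in dest: PC_sub)

lemma PC_bot: "fbot PC (\<subseteq>) = jcl G R {}"
  unfolding fbot_def by (simp add: PC_lub)

lemma gen_eq: "g \<in> G \<Longrightarrow> pres_gen G R g = jcl G R {S \<in> FS. g \<in> S}"
  unfolding pres_gen_def jcl_def
proof (intro arg_cong[where f=Inter] Collect_cong conj_cong refl)
  fix D assume g: "g \<in> G" and D: "D \<in> PC"
  have "{g} \<in> FS" using g by (simp add: fin_subsets_def)
  then show "({g} \<in> D) = ({S \<in> FS. g \<in> S} \<subseteq> D)" using D PC_up by blast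
qed

end

locale mon =
  fixes M :: "('i, 't) set_monad" and c0 c1 :: 'i and K :: "'k set"
  assumes monad: "is_set_monad M" and rank: "ranked M K"
begin

lemma mp1: "\<forall>A. \<forall>a\<in>A. ret M A a \<in> Tm M A"
  using monad unfolding is_set_monad_def by (elim conjE) assumption
lemma mp2: "\<forall>A B t u. t \<in> Tm M A \<and> (\<forall>a\<in>A. u a \<in> Tm M B) \<longrightarrow> bnd M A B t u \<in> Tm M B"
  using monad unfolding is_set_monad_def by (elim conjE) assumption
lemma mp3: "\<forall>A B t u u'. t \<in> Tm M A \<and> (\<forall>a\<in>A. u a = u' a) \<longrightarrow> bnd M A B t u = bnd M A B t u'"
  using monad unfolding is_set_monad_def by (elim conjE) assumption
lemma mp5: "\<forall>A t. t \<in> Tm M A \<longrightarrow> bnd M A A t (ret M A) = t"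
  using monad unfolding is_set_monad_def by (elim conjE) assumption

lemma m_ret: "a \<in> A \<Longrightarrow> ret M A a \<in> Tm M A"
  using mp1 by blast
lemma m_bnd: "t \<in> Tm M A \<Longrightarrow> (\<And>a. a \<in> A \<Longrightarrow> u a \<in> Tm M B) \<Longrightarrow> bnd M A B t u \<in> Tm M B"
  using mp2 by blast
lemma m_cong: "t \<in> Tm M A \<Longrightarrow> (\<And>a. a \<in> A \<Longrightarrow> u a = u' a) \<Longrightarrow> bnd M A B t u = bnd M A B t u'"
  using mp3 by blast
lemma m_runit: "t \<in> Tm M A \<Longrightarrow> bnd M A A t (ret M A) = t"
  using mp5 by blast

abbreviation "G \<equiv> Tm M {c0, c1}"
abbreviation "R \<equiv> lb0_rels M c0 c1"
abbreviation "T1 \<equiv> Tm M {c0}"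

lemma mapsto_in: "t \<in> Tm M A \<Longrightarrow> mapsto M c0 c1 A t a \<in> G"
  unfolding mapsto_def by (rule m_bnd) (auto intro: m_ret)

lemma K_ne: "K \<noteq> {}"
proof
  assume K: "K = {}"
  have "ret M {c0} c0 \<in> Tm M {c0}" by (rule m_ret) simp
  then obtain I :: "'i set" where "(card_of I, card_of K) \<in> ordLess"
    using rank unfolding ranked_def by blast
  then show False using K not_ordLess_ordLeq card_of_empty by blast
qed

lemma rels_wf: "(S, C) \<in> R \<Longrightarrow> S \<in> fin_subsets G"
  unfolding lb0_rels_def fin_subsets_def
  by (auto intro!: mapsto_in m_bnd)

sublocale pres G R by unfold_locales (rule rels_wf)

lemma LB0_eq: "LB0 M c0 c1 = PC" unfolding LB0_def ..
lemma gen_eq': "lb0_gen M c0 c1 g = pres_gen G R g" unfolding lb0_gen_def ..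

definition upg :: "'t \<Rightarrow> 't set set" where "upg g = {S \<in> FS. g \<in> S}"

lemma upg_upcl: "upcl G (upg g)" unfolding upcl_def upg_def by blast

lemma gen_jcl: "g \<in> G \<Longrightarrow> lb0_gen M c0 c1 g = jcl G R (upg g)"
  unfolding gen_eq' upg_def by (rule gen_eq)

lemma upg_sub: "upg g \<subseteq> FS" unfolding upg_def by blast

lemma gen_in: "g \<in> G \<Longrightarrow> lb0_gen M c0 c1 g \<in> PC"
  using gen_jcl jcl_in upg_sub by metis

lemma single_in_gen: "g \<in> G \<Longrightarrow> {g} \<in> lb0_gen M c0 c1 g"
proof -
  assume g: "g \<in> G"
  have "{g} \<in> upg g" using g unfolding upg_def fin_subsets_def by simp
  then show ?thesis using g gen_jcl jcl_sup by blast
qed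

lemma rel1: "t \<in> Tm M A \<Longrightarrow> a \<in> A \<Longrightarrow> a' \<in> A \<Longrightarrow> a \<noteq> a' \<Longrightarrow>
   ({mapsto M c0 c1 A t a, mapsto M c0 c1 A t a'}, {}) \<in> R"
  unfolding lb0_rels_def by (intro UnI1) blast

lemma rel2: "t \<in> Tm M A \<Longrightarrow> a \<in> A \<Longrightarrow>
   ({}, {{mapsto M c0 c1 A (bnd M A A t (\<lambda>_. ret M A a)) a}}) \<in> R"
  unfolding lb0_rels_def by (intro UnI1 UnI2) blast

lemma rel3: "t \<in> Tm M A \<Longrightarrow> (\<And>a. a \<in> A \<Longrightarrow> u a \<in> Tm M B) \<Longrightarrow> b \<in> B \<Longrightarrow>
   ({mapsto M c0 c1 B (bnd M A B t u) b},
        {{mapsto M c0 c1 A t a, mapsto M c0 c1 B (bnd M A B t (\<lambda>_. u a)) b} | a. a \<in> A}) \<in> R"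
  unfolding lb0_rels_def by (rule UnI1, rule UnI2) blast

lemma gen_meet_bot:
  assumes t: "t \<in> Tm M A" and a: "a \<in> A" "a' \<in> A" "a \<noteq> a'"
  shows "lb0_gen M c0 c1 (mapsto M c0 c1 A t a) \<inter> lb0_gen M c0 c1 (mapsto M c0 c1 A t a') = fbot PC (\<subseteq>)"
proof -
  let ?g = "mapsto M c0 c1 A t a" and ?g' = "mapsto M c0 c1 A t a'"
  have g: "?g \<in> G" "?g' \<in> G" using t by (auto intro: mapsto_in)
  have bot: "jcl G R {} \<in> PC" by (rule jcl_in) simp
  have "upg ?g \<inter> upg ?g' \<subseteq> jcl G R {}"
  proof
    fix S assume S: "S \<in> upg ?g \<inter> upg ?g'"
    show "S \<in> jcl G R {}" unfolding jcl_def
    proof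
      fix D assume "D \<in> {D \<in> PC. {} \<subseteq> D}"
      then have D: "D \<in> PC" by blast
      have "S \<union> {?g, ?g'} \<in> D"
        by (rule PC_sat[OF D rel1[OF t a]]) (use S in \<open>auto simp: upg_def\<close>)
      moreover have "S \<union> {?g, ?g'} = S" using S unfolding upg_def by blast
      ultimately show "S \<in> D" by simp
    qed
  qed
  then have "jcl G R (upg ?g \<inter> upg ?g') \<subseteq> jcl G R {}" using jcl_least[OF bot] by blast
  moreover have "jcl G R (upg ?g) \<inter> jcl G R (upg ?g') \<subseteq> jcl G R (upg ?g \<inter> upg ?g')"
    by (rule nucleus[OF upg_upcl upg_upcl])
  moreover have "jcl G R {} \<subseteq> jcl G R (upg ?g) \<inter> jcl G R (upg ?g')"
    using jcl_least jcl_in[OF upg_sub] by (metis Int_greatest empty_subsetI)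
  ultimately show ?thesis unfolding PC_bot gen_jcl[OF g(1)] gen_jcl[OF g(2)] by blast
qed

lemma gen_top:
  assumes t: "t \<in> Tm M A" and a0: "a0 \<in> A"
  shows "lub PC (\<subseteq>) {lb0_gen M c0 c1 (mapsto M c0 c1 A t a) | a. a \<in> A} = FS"
proof -
  let ?S = "{lb0_gen M c0 c1 (mapsto M c0 c1 A t a) | a. a \<in> A}"
  have S: "?S \<subseteq> PC" using t by (auto intro!: gen_in mapsto_in)
  let ?D = "lub PC (\<subseteq>) ?S"
  have D: "?D \<in> PC" using S by (rule P.lub_in)
  let ?u = "\<lambda>_::'i. ret M A a0"
  let ?gs = "mapsto M c0 c1 A (bnd M A A t ?u) a0"
  have gs: "?gs \<in> G" using t a0 by (auto intro!: mapsto_in m_bnd m_ret)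
  have ga: "{mapsto M c0 c1 A t a} \<in> ?D" if a: "a \<in> A" for a
  proof -
    have "lb0_gen M c0 c1 (mapsto M c0 c1 A t a) \<subseteq> ?D" using a S by (intro P.lub_upper) auto
    then show ?thesis using single_in_gen mapsto_in[OF t] by blast
  qed
  have "FS \<subseteq> ?D"
  proof
    fix U assume U: "U \<in> FS"
    have "U \<union> {?gs} \<in> ?D"
    proof (rule PC_sat[OF D rel3[OF t, of ?u A a0]])
      show "\<And>a. a \<in> A \<Longrightarrow> ret M A a0 \<in> Tm M A" using a0 by (rule m_ret)
      show "a0 \<in> A" by (rule a0)
      show "U \<in> FS" by (rule U)
      fix S' assume "S' \<in> {{mapsto M c0 c1 A t a, mapsto M c0 c1 A (bnd M A A t (\<lambda>_. ?u a)) a0} | a. a \<in> A}"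
      then obtain a where a: "a \<in> A" and S': "S' = {mapsto M c0 c1 A t a, ?gs}" by blast
      have "U \<union> S' \<in> FS" using U S' gs mapsto_in[OF t] unfolding fin_subsets_def by auto
      moreover have "{mapsto M c0 c1 A t a} \<subseteq> U \<union> S'" using S' by blast
      ultimately show "U \<union> S' \<in> ?D" using PC_up[OF D ga[OF a]] by blast
    qed
    then have "U \<union> {} \<in> ?D"
      by (intro PC_sat[OF D rel2[OF t a0]]) (use U in auto)
    then show "U \<in> ?D" by simp
  qed
  then show ?thesis using D PC_sub by blast
qed

lemma lub_bots: "S \<subseteq> {fbot PC (\<subseteq>)} \<Longrightarrow> lub PC (\<subseteq>) S = fbot PC (\<subseteq>)"
proof -
  assume S: "S \<subseteq> {fbot PC (\<subseteq>)}"
  have SP: "S \<subseteq> PC" using S P.bot_in by blast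
  have "lub PC (\<subseteq>) S \<subseteq> fbot PC (\<subseteq>)"
    by (rule P.lub_least[OF SP P.bot_in]) (use S in blast)
  moreover have "fbot PC (\<subseteq>) \<subseteq> lub PC (\<subseteq>) S" using P.bot_le P.lub_in SP by blast
  ultimately show ?thesis by (rule subset_antisym)
qed

lemma gen_compl:
  assumes t: "t \<in> Tm M A" and a: "a \<in> A"
  shows "complemented PC (\<subseteq>) (lb0_gen M c0 c1 (mapsto M c0 c1 A t a))"
proof -
  let ?b = "lb0_gen M c0 c1 (mapsto M c0 c1 A t a)"
  let ?S = "{lb0_gen M c0 c1 (mapsto M c0 c1 A t a') | a'. a' \<in> A \<and> a' \<noteq> a}"
  let ?c = "lub PC (\<subseteq>) ?S"
  have b: "?b \<in> PC" using t by (intro gen_in mapsto_in)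
  have S: "?S \<subseteq> PC" using t by (auto intro!: gen_in mapsto_in)
  have c: "?c \<in> PC" using S by (rule P.lub_in)
  have "meet2 PC (\<subseteq>) ?b ?c = lub PC (\<subseteq>) ((\<lambda>s. meet2 PC (\<subseteq>) ?b s) ` ?S)"
    using b S by (rule P.distrib)
  also have "\<dots> = fbot PC (\<subseteq>)"
  proof (rule lub_bots)
    show "(\<lambda>s. meet2 PC (\<subseteq>) ?b s) ` ?S \<subseteq> {fbot PC (\<subseteq>)}"
    proof
      fix y assume "y \<in> (\<lambda>s. meet2 PC (\<subseteq>) ?b s) ` ?S"
      then obtain a' where a': "a' \<in> A" "a' \<noteq> a" and y: "y = meet2 PC (\<subseteq>) ?b (lb0_gen M c0 c1 (mapsto M c0 c1 A t a'))"
        by blast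
      have "y = ?b \<inter> lb0_gen M c0 c1 (mapsto M c0 c1 A t a')"
        unfolding y using b t by (intro PC_meet gen_in mapsto_in)
      also have "\<dots> = fbot PC (\<subseteq>)" using gen_meet_bot[OF t a a'(1)] a'(2) by metis
      finally show "y \<in> {fbot PC (\<subseteq>)}" by simp
    qed
  qed
  finally have 1: "meet2 PC (\<subseteq>) ?b ?c = fbot PC (\<subseteq>)" .
  have j: "join2 PC (\<subseteq>) ?b ?c \<in> PC" using b c by (rule P.join_in)
  have "FS = lub PC (\<subseteq>) {lb0_gen M c0 c1 (mapsto M c0 c1 A t a) | a. a \<in> A}"
    using gen_top[OF t a] by simp
  also have "\<dots> \<subseteq> join2 PC (\<subseteq>) ?b ?c"
  proof (rule P.lub_least)
    show "{lb0_gen M c0 c1 (mapsto M c0 c1 A t a) | a. a \<in> A} \<subseteq> PC" using t by (auto intro!: gen_in mapsto_in)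
    show "join2 PC (\<subseteq>) ?b ?c \<in> PC" by (rule j)
    fix s assume "s \<in> {lb0_gen M c0 c1 (mapsto M c0 c1 A t a) | a. a \<in> A}"
    then obtain a' where a': "a' \<in> A" "s = lb0_gen M c0 c1 (mapsto M c0 c1 A t a')" by blast
    show "s \<subseteq> join2 PC (\<subseteq>) ?b ?c"
    proof (cases "a' = a")
      case True then show ?thesis using a' P.join_ge1[OF b c] by simp
    next
      case False
      then have "s \<in> ?S" using a' by blast
      then have "s \<subseteq> ?c" using S P.lub_upper by blast
      then show ?thesis using P.join_ge2[OF b c] by blast
    qed
  qed
  finally have "join2 PC (\<subseteq>) ?b ?c = FS" using j PC_sub by blast
  then have 2: "join2 PC (\<subseteq>) ?b ?c = ftop PC (\<subseteq>)" by (simp add: PC_top)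
  show ?thesis unfolding complemented_def using b c 1 2 by blast
qed

end

context mon begin

definition Jc :: "'t set set \<Rightarrow> bool" where
  "Jc x \<longleftrightarrow> x \<in> PC \<and> x = lub PC (\<subseteq>) {b. complemented PC (\<subseteq>) b \<and> b \<subseteq> x}"

lemma compl_in: "complemented PC (\<subseteq>) b \<Longrightarrow> b \<in> PC" unfolding complemented_def by blast

lemma Cset_sub: "{b. complemented PC (\<subseteq>) b \<and> b \<subseteq> x} \<subseteq> PC" using compl_in by blast

lemma J_compl: "complemented PC (\<subseteq>) b \<Longrightarrow> Jc b"
proof -
  assume b: "complemented PC (\<subseteq>) b"
  have bP: "b \<in> PC" using b by (rule compl_in)
  have "lub PC (\<subseteq>) {c. complemented PC (\<subseteq>) c \<and> c \<subseteq> b} \<subseteq> b"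
    by (rule P.lub_least[OF Cset_sub bP]) blast
  moreover have "b \<subseteq> lub PC (\<subseteq>) {c. complemented PC (\<subseteq>) c \<and> c \<subseteq> b}"
    by (rule P.lub_upper[OF Cset_sub]) (use b in blast)
  ultimately show ?thesis unfolding Jc_def using bP by blast
qed

lemma J_lub:
  assumes S: "S \<subseteq> PC" and J: "\<And>s. s \<in> S \<Longrightarrow> Jc s"
  shows "Jc (lub PC (\<subseteq>) S)"
proof -
  let ?x = "lub PC (\<subseteq>) S"
  let ?B = "{b. complemented PC (\<subseteq>) b \<and> b \<subseteq> ?x}"
  have x: "?x \<in> PC" using S by (rule P.lub_in)
  have 1: "lub PC (\<subseteq>) ?B \<subseteq> ?x" by (rule P.lub_least[OF Cset_sub x]) blast
  have 2: "?x \<subseteq> lub PC (\<subseteq>) ?B"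
  proof (rule P.lub_least[OF S P.lub_in[OF Cset_sub]])
    fix s assume s: "s \<in> S"
    have sx: "s \<subseteq> ?x" using S s by (rule P.lub_upper)
    have "s = lub PC (\<subseteq>) {b. complemented PC (\<subseteq>) b \<and> b \<subseteq> s}" using J[OF s] unfolding Jc_def by blast
    also have "\<dots> \<subseteq> lub PC (\<subseteq>) ?B"
      by (rule P.lub_mono[OF _ Cset_sub]) (use sx in blast)
    finally show "s \<subseteq> lub PC (\<subseteq>) ?B" .
  qed
  show ?thesis unfolding Jc_def using x 1 2 by blast
qed

lemma J_meet:
  assumes Jx: "Jc x" and Jy: "Jc y"
  shows "Jc (x \<inter> y)"
proof -
  have x: "x \<in> PC" and y: "y \<in> PC" using Jx Jy unfolding Jc_def by auto
  have xy: "x \<inter> y \<in> PC" using P.meet_in[OF x y] PC_meet[OF x y] by simp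
  let ?Bx = "{b. complemented PC (\<subseteq>) b \<and> b \<subseteq> x}"
  let ?By = "{b. complemented PC (\<subseteq>) b \<and> b \<subseteq> y}"
  let ?B = "{b. complemented PC (\<subseteq>) b \<and> b \<subseteq> x \<inter> y}"
  have 1: "lub PC (\<subseteq>) ?B \<subseteq> x \<inter> y" by (rule P.lub_least[OF Cset_sub xy]) blast
  have "x \<inter> y = meet2 PC (\<subseteq>) (lub PC (\<subseteq>) ?Bx) (lub PC (\<subseteq>) ?By)"
    using Jx Jy PC_meet[OF x y] unfolding Jc_def by simp
  also have "\<dots> \<subseteq> lub PC (\<subseteq>) ?B"
  proof (rule P.meet_lub_lub_le[OF Cset_sub Cset_sub P.lub_in[OF Cset_sub]])
    fix s s' assume s: "s \<in> ?Bx" and s': "s' \<in> ?By"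
    have sP: "s \<in> PC" and s'P: "s' \<in> PC" using s s' compl_in by auto
    have c: "complemented PC (\<subseteq>) (meet2 PC (\<subseteq>) s s')"
      using s s' by (intro P.complemented_meet) auto
    have e: "meet2 PC (\<subseteq>) s s' = s \<inter> s'" using sP s'P by (rule PC_meet)
    have "meet2 PC (\<subseteq>) s s' \<in> ?B" using c e s s' by auto
    then show "meet2 PC (\<subseteq>) s s' \<subseteq> lub PC (\<subseteq>) ?B" by (rule P.lub_upper[OF Cset_sub])
  qed
  finally have 2: "x \<inter> y \<subseteq> lub PC (\<subseteq>) ?B" .
  show ?thesis unfolding Jc_def using xy 1 2 by blast
qed

lemma bot_sub_FS: "fbot PC (\<subseteq>) \<subseteq> FS" using P.bot_in PC_sub by blast

lemma FS_compl: "complemented PC (\<subseteq>) FS"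
proof -
  have b: "fbot PC (\<subseteq>) \<in> PC" by (rule P.bot_in)
  have 1: "meet2 PC (\<subseteq>) FS (fbot PC (\<subseteq>)) = fbot PC (\<subseteq>)"
    using PC_meet[OF FS_in b] bot_sub_FS by blast
  have j: "join2 PC (\<subseteq>) FS (fbot PC (\<subseteq>)) \<in> PC" using FS_in b by (rule P.join_in)
  have "FS \<subseteq> join2 PC (\<subseteq>) FS (fbot PC (\<subseteq>))" using FS_in b by (rule P.join_ge1)
  then have 2: "join2 PC (\<subseteq>) FS (fbot PC (\<subseteq>)) = ftop PC (\<subseteq>)" using j PC_sub PC_top by blast
  show ?thesis unfolding complemented_def using FS_in b 1 2 by blast
qed

lemma PC_glb: "F \<subseteq> PC \<Longrightarrow> glb PC (\<subseteq>) F = FS \<inter> \<Inter>F"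
proof -
  assume F: "F \<subseteq> PC"
  have "\<Inter>(insert FS F) \<in> PC" using F FS_in by (intro Inter_in) auto
  then have i: "FS \<inter> \<Inter>F \<in> PC" by simp
  show ?thesis
    by (rule glb_eq_gen[OF subset_antisym]) (use i F PC_sub in \<open>auto simp: is_glb_def\<close>)
qed

lemma J_glb_fin: "finite F \<Longrightarrow> F \<subseteq> PC \<Longrightarrow> (\<forall>x\<in>F. Jc x) \<Longrightarrow> Jc (FS \<inter> \<Inter>F)"
proof (induction F rule: finite_induct)
  case empty
  then show ?case using J_compl[OF FS_compl] by simp
next
  case (insert x F)
  have "FS \<inter> \<Inter>(insert x F) = x \<inter> (FS \<inter> \<Inter>F)" by blast
  moreover have "Jc (x \<inter> (FS \<inter> \<Inter>F))" by (rule J_meet) (use insert in auto)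
  ultimately show ?case by simp
qed

definition tr1set :: "'t \<Rightarrow> 't \<Rightarrow> 't set set set" where
  "tr1set m m' = {lb0_gen M c0 c1 (mapsto M c0 c1 A t a) | A t u u' a.
        (card_of A, card_of K) \<in> ordLeq \<and> t \<in> Tm M A \<and>
        (\<forall>x\<in>A. u x \<in> Tm M {c0}) \<and> (\<forall>x\<in>A. u' x \<in> Tm M {c0}) \<and>
        a \<in> A \<and> u a = u' a \<and> m = bnd M A {c0} t u \<and> m' = bnd M A {c0} t u'}"

lemma trace1_eq: "trace1 M c0 c1 K m m' = lub PC (\<subseteq>) (tr1set m m')"
  unfolding trace1_def tr1set_def LB0_eq ..

lemma tr1set_compl: "s \<in> tr1set m m' \<Longrightarrow> complemented PC (\<subseteq>) s"
proof -
  assume "s \<in> tr1set m m'"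
  then obtain A t a where "s = lb0_gen M c0 c1 (mapsto M c0 c1 A t a)" "t \<in> Tm M A" "a \<in> A"
    unfolding tr1set_def by blast
  then show ?thesis using gen_compl by simp
qed

lemma tr1set_sub: "tr1set m m' \<subseteq> PC" using tr1set_compl compl_in by blast

lemma trace1_in: "trace1 M c0 c1 K m m' \<in> PC"
  unfolding trace1_eq by (rule P.lub_in[OF tr1set_sub])

lemma J_trace1: "Jc (trace1 M c0 c1 K m m')"
  unfolding trace1_eq by (rule J_lub[OF tr1set_sub]) (rule J_compl[OF tr1set_compl])

lemma tr1set_sym1: "x \<in> tr1set m m' \<Longrightarrow> x \<in> tr1set m' m"
proof -
  assume "x \<in> tr1set m m'"
  then obtain A t u u' a where h: "x = lb0_gen M c0 c1 (mapsto M c0 c1 A t a)"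
        "(card_of A, card_of K) \<in> ordLeq" "t \<in> Tm M A"
        "\<forall>x\<in>A. u x \<in> Tm M {c0}" "\<forall>x\<in>A. u' x \<in> Tm M {c0}"
        "a \<in> A" "u a = u' a" "m = bnd M A {c0} t u" "m' = bnd M A {c0} t u'"
    unfolding tr1set_def by blast
  show "x \<in> tr1set m' m" unfolding tr1set_def
    using h(1-6,8,9) h(7)[symmetric]
    by (intro CollectI exI[of _ A] exI[of _ t] exI[of _ u'] exI[of _ u] exI[of _ a] conjI) assumption+
qed

lemma tr1set_sym: "tr1set m m' = tr1set m' m"
  by (intro equalityI subsetI) (erule tr1set_sym1)+

lemma trace1_sym: "trace1 M c0 c1 K m m' = trace1 M c0 c1 K m' m"
  unfolding trace1_eq by (subst tr1set_sym) (rule refl)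

lemma trace1_top: "m \<in> T1 \<Longrightarrow> trace1 M c0 c1 K m m = FS"
proof -
  assume m: "m \<in> T1"
  let ?g = "lb0_gen M c0 c1 (mapsto M c0 c1 {c0} m c0)"
  have gP: "?g \<in> PC" using m by (intro gen_in mapsto_in)
  have "lub PC (\<subseteq>) {lb0_gen M c0 c1 (mapsto M c0 c1 {c0} m a) | a. a \<in> {c0}} = FS"
    using gen_top[OF m] by simp
  moreover have "{lb0_gen M c0 c1 (mapsto M c0 c1 {c0} m a) | a. a \<in> {c0}} = {?g}" by blast
  moreover have "lub PC (\<subseteq>) {?g} = ?g"
    by (rule P.lub_eqI) (use gP in auto)
  ultimately have g: "?g = FS" by simp
  have "?g \<in> tr1set m m"
    unfolding tr1set_def
  proof (intro CollectI exI[of _ "{c0}"] exI[of _ m] exI[of _ "ret M {c0}"] exI[of _ "ret M {c0}"] exI[of _ c0] conjI)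
    show "(card_of {c0}, card_of K) \<in> ordLeq" using K_ne by (rule card_of_singl_ordLeq)
    show "\<forall>x\<in>{c0}. ret M {c0} x \<in> Tm M {c0}" by (auto intro: m_ret)
    show "m = bnd M {c0} {c0} m (ret M {c0})" using m_runit[OF m] by simp
  qed (use m m_runit[OF m] in \<open>auto intro: m_ret\<close>)
  then have "FS \<subseteq> trace1 M c0 c1 K m m" unfolding trace1_eq using g P.lub_upper[OF tr1set_sub] by metis
  then show ?thesis using trace1_in PC_sub by blast
qed

definition chains :: "'t \<Rightarrow> 't \<Rightarrow> 't set set set" where
  "chains m m' = {glb PC (\<subseteq>) {trace1 M c0 c1 K (ms i) (ms (Suc i)) | i. i < k} | k ms.
        1 \<le> k \<and> ms 0 = m \<and> ms k = m' \<and> (\<forall>i\<le>k. ms i \<in> T1)}"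

lemma trace_eq: "trace M c0 c1 K m m' = lub PC (\<subseteq>) (chains m m')"
  unfolding trace_def chains_def LB0_eq ..

lemma chset_eq: "{trace1 M c0 c1 K (ms i) (ms (Suc i)) | i. i < k} = (\<lambda>i. trace1 M c0 c1 K (ms i) (ms (Suc i))) ` {..<k}"
  by auto

lemma chset_sub: "{trace1 M c0 c1 K (ms i) (ms (Suc i)) | i. i < k} \<subseteq> PC"
  using trace1_in by blast

lemma chains_sub: "chains m m' \<subseteq> PC"
  unfolding chains_def using P.glb_in[OF chset_sub] by blast

lemma trace_in: "trace M c0 c1 K m m' \<in> PC"
  unfolding trace_eq by (rule P.lub_in[OF chains_sub])

lemma J_trace: "Jc (trace M c0 c1 K m m')"
  unfolding trace_eq
proof (rule J_lub[OF chains_sub])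
  fix s assume "s \<in> chains m m'"
  then obtain k ms where s: "s = glb PC (\<subseteq>) {trace1 M c0 c1 K (ms i) (ms (Suc i)) | i. i < k}"
    unfolding chains_def mem_Collect_eq by (elim exE conjE) (rule that)
  show "Jc s" unfolding s PC_glb[OF chset_sub]
    by (rule J_glb_fin) (auto simp: chset_eq intro: trace1_in J_trace1)
qed

lemma trace_ge1: "m \<in> T1 \<Longrightarrow> m' \<in> T1 \<Longrightarrow> trace1 M c0 c1 K m m' \<subseteq> trace M c0 c1 K m m'"
proof -
  assume m: "m \<in> T1" and m': "m' \<in> T1"
  define ms where "ms = (\<lambda>i::nat. if i = 0 then m else m')"
  have e: "{trace1 M c0 c1 K (ms i) (ms (Suc i)) | i. i < 1} = {trace1 M c0 c1 K m m'}"
    unfolding ms_def by auto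
  have "glb PC (\<subseteq>) {trace1 M c0 c1 K (ms i) (ms (Suc i)) | i. i < 1} \<in> chains m m'"
    unfolding chains_def using m m' by (intro CollectI exI[of _ 1] exI[of _ ms]) (auto simp: ms_def)
  moreover have "glb PC (\<subseteq>) {trace1 M c0 c1 K (ms i) (ms (Suc i)) | i. i < 1} = trace1 M c0 c1 K m m'"
  proof -
    have "trace1 M c0 c1 K m m' \<subseteq> FS" using trace1_in PC_sub by blast
    then show ?thesis unfolding e using PC_glb[of "{trace1 M c0 c1 K m m'}"] trace1_in by auto
  qed
  ultimately show ?thesis unfolding trace_eq using P.lub_upper[OF chains_sub] by metis
qed

lemma trace_top: "m \<in> T1 \<Longrightarrow> trace M c0 c1 K m m = FS"
  using trace_ge1[of m m] trace1_top[of m] trace_in PC_sub by blast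

lemma trace_trans: "trace M c0 c1 K m a \<inter> trace M c0 c1 K m b \<subseteq> trace M c0 c1 K a b"
proof -
  have "meet2 PC (\<subseteq>) (lub PC (\<subseteq>) (chains m a)) (lub PC (\<subseteq>) (chains m b)) \<subseteq> lub PC (\<subseteq>) (chains a b)"
  proof (rule P.meet_lub_lub_le[OF chains_sub chains_sub P.lub_in[OF chains_sub]])
    fix s s' assume s: "s \<in> chains m a" and s': "s' \<in> chains m b"
    from s obtain k ms where s_eq: "s = glb PC (\<subseteq>) {trace1 M c0 c1 K (ms i) (ms (Suc i)) | i. i < k}"
      and k: "1 \<le> k" "ms 0 = m" "ms k = a" "\<forall>i\<le>k. ms i \<in> T1"
      unfolding chains_def mem_Collect_eq by (elim exE conjE) (rule that, assumption+)
    from s' obtain l ns where s'_eq: "s' = glb PC (\<subseteq>) {trace1 M c0 c1 K (ns i) (ns (Suc i)) | i. i < l}"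
      and l: "1 \<le> l" "ns 0 = m" "ns l = b" "\<forall>i\<le>l. ns i \<in> T1"
      unfolding chains_def mem_Collect_eq by (elim exE conjE) (rule that, assumption+)
    define ps where "ps = (\<lambda>i. if i \<le> k then ms (k - i) else ns (i - k))"
    let ?F1 = "{trace1 M c0 c1 K (ms i) (ms (Suc i)) | i. i < k}"
    let ?F2 = "{trace1 M c0 c1 K (ns i) (ns (Suc i)) | i. i < l}"
    let ?F3 = "{trace1 M c0 c1 K (ps i) (ps (Suc i)) | i. i < k + l}"
    have F3: "?F3 \<subseteq> ?F1 \<union> ?F2"
    proof
      fix y assume "y \<in> ?F3"
      then obtain i where i: "i < k + l" and y: "y = trace1 M c0 c1 K (ps i) (ps (Suc i))" by blast
      show "y \<in> ?F1 \<union> ?F2"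
      proof (cases "i < k")
        case True
        define j where "j = k - Suc i"
        have "ps i = ms (Suc j)" "ps (Suc i) = ms j" unfolding ps_def j_def using True by (auto simp: Suc_diff_Suc)
        then have "y = trace1 M c0 c1 K (ms j) (ms (Suc j))" using y trace1_sym by metis
        moreover have "j < k" unfolding j_def using True by simp
        ultimately show ?thesis by blast
      next
        case False
        define j where "j = i - k"
        have "ps i = ns j" unfolding ps_def j_def using False k(2) l(2) by (cases "i = k") auto
        moreover have "ps (Suc i) = ns (Suc j)" unfolding ps_def j_def using False by (simp add: Suc_diff_le)
        moreover have "j < l" unfolding j_def using False i by simp
        ultimately have "y = trace1 M c0 c1 K (ns j) (ns (Suc j))" "j < l" using y by simp_all
        then show ?thesis by blast
      qed
    qed
    have "glb PC (\<subseteq>) ?F3 \<in> chains a b"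
      unfolding chains_def
    proof (intro CollectI exI conjI)
      show "1 \<le> k + l" using k by simp
      show "ps 0 = a" unfolding ps_def using k by simp
      show "ps (k + l) = b" unfolding ps_def using l by simp
      show "\<forall>i\<le>k + l. ps i \<in> T1" unfolding ps_def using k l by auto
    qed (rule refl)
    then have g3: "glb PC (\<subseteq>) ?F3 \<subseteq> lub PC (\<subseteq>) (chains a b)" by (rule P.lub_upper[OF chains_sub])
    have "meet2 PC (\<subseteq>) s s' = s \<inter> s'"
      using s s' chains_sub by (intro PC_meet) auto
    also have "\<dots> = (FS \<inter> \<Inter>?F1) \<inter> (FS \<inter> \<Inter>?F2)"
      unfolding s_eq s'_eq PC_glb[OF chset_sub] ..
    also have "\<dots> \<subseteq> FS \<inter> \<Inter>?F3"
    proof (rule subsetI)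
      fix x assume x: "x \<in> (FS \<inter> \<Inter>?F1) \<inter> (FS \<inter> \<Inter>?F2)"
      have "x \<in> \<Inter>?F3"
      proof (rule InterI)
        fix y assume y3: "y \<in> ?F3"
        have "y \<in> ?F1 \<union> ?F2" using F3 y3 by (rule subsetD)
        then show "x \<in> y" using x by (elim UnE) (auto dest: InterD)
      qed
      then show "x \<in> FS \<inter> \<Inter>?F3" using x by (intro IntI) (elim IntE, assumption)+
    qed
    also have "\<dots> = glb PC (\<subseteq>) ?F3" using PC_glb[OF chset_sub] by simp
    finally show "meet2 PC (\<subseteq>) s s' \<subseteq> lub PC (\<subseteq>) (chains a b)" using g3 by (rule order_trans)
  qed
  then show ?thesis unfolding trace_eq using PC_meet[OF P.lub_in[OF chains_sub] P.lub_in[OF chains_sub]] by simp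
qed

lemma trace_sym: "a \<in> T1 \<Longrightarrow> trace M c0 c1 K a b \<subseteq> trace M c0 c1 K b a"
proof -
  assume a: "a \<in> T1"
  have "trace M c0 c1 K a b = trace M c0 c1 K a b \<inter> trace M c0 c1 K a a"
    using trace_top[OF a] trace_in PC_sub by blast
  also have "\<dots> \<subseteq> trace M c0 c1 K b a" by (rule trace_trans)
  finally show ?thesis .
qed

end

context frm begin
lemma meet_distr_self: "x \<in> X \<Longrightarrow> y \<in> X \<Longrightarrow> z \<in> X \<Longrightarrow>
  meet2 X le (meet2 X le x y) z = meet2 X le (meet2 X le x z) (meet2 X le y z)"
proof -
  assume x: "x \<in> X" and y: "y \<in> X" and z: "z \<in> X"
  have xy: "meet2 X le x y \<in> X" and xz: "meet2 X le x z \<in> X" and yz: "meet2 X le y z \<in> X"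
    using x y z by (auto intro: meet_in)
  have l: "meet2 X le (meet2 X le x y) z \<in> X" using xy z by (rule meet_in)
  have r: "meet2 X le (meet2 X le x z) (meet2 X le y z) \<in> X" using xz yz by (rule meet_in)
  have l1: "le (meet2 X le (meet2 X le x y) z) x"
    using trans[OF l xy x meet_le1[OF xy z] meet_le1[OF x y]] .
  have l2: "le (meet2 X le (meet2 X le x y) z) y"
    using trans[OF l xy y meet_le1[OF xy z] meet_le2[OF x y]] .
  have l3: "le (meet2 X le (meet2 X le x y) z) z" using xy z by (rule meet_le2)
  have r1: "le (meet2 X le (meet2 X le x z) (meet2 X le y z)) x"
    using trans[OF r xz x meet_le1[OF xz yz] meet_le1[OF x z]] .
  have r2: "le (meet2 X le (meet2 X le x z) (meet2 X le y z)) y"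
    using trans[OF r yz y meet_le2[OF xz yz] meet_le1[OF y z]] .
  have r3: "le (meet2 X le (meet2 X le x z) (meet2 X le y z)) z"
    using trans[OF r xz z meet_le1[OF xz yz] meet_le2[OF x z]] .
  show ?thesis
  proof (rule antisym[OF l r])
    show "le (meet2 X le (meet2 X le x y) z) (meet2 X le (meet2 X le x z) (meet2 X le y z))"
      using l1 l2 l3 l x y z xz yz by (intro meet_greatest) auto
    show "le (meet2 X le (meet2 X le x z) (meet2 X le y z)) (meet2 X le (meet2 X le x y) z)"
      using r1 r2 r3 r x y z xy by (intro meet_greatest) auto
  qed
qed
end

context mon begin

abbreviation "LB1' \<equiv> LB1 M c0 c1 K"
abbreviation "tr \<equiv> trace M c0 c1 K"

lemma LB1_iff: "w \<in> LB1' \<longleftrightarrow> (\<forall>m\<in>T1. w m \<in> PC) \<and> (\<forall>m. m \<notin> T1 \<longrightarrow> w m = undefined) \<and>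
   (\<forall>b m1 m2. complemented PC (\<subseteq>) b \<and> m1 \<in> T1 \<and> m2 \<in> T1 \<and> b \<subseteq> tr m1 m2 \<longrightarrow> b \<inter> w m1 = b \<inter> w m2)"
proof -
  have "meet2 PC (\<subseteq>) b (w m) = b \<inter> w m" if "complemented PC (\<subseteq>) b" "m \<in> T1" "\<forall>m\<in>T1. w m \<in> PC" for b m
    using that compl_in PC_meet by blast
  then show ?thesis unfolding LB1_def LB0_eq trace_equiv_def mem_Collect_eq
    by (smt (verit))
qed

lemma LB1_val: "w \<in> LB1' \<Longrightarrow> m \<in> T1 \<Longrightarrow> w m \<in> PC"
  using LB1_iff by blast
lemma LB1_out: "w \<in> LB1' \<Longrightarrow> m \<notin> T1 \<Longrightarrow> w m = undefined"
  using LB1_iff by blast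
lemma LB1_compat: "w \<in> LB1' \<Longrightarrow> complemented PC (\<subseteq>) b \<Longrightarrow> m1 \<in> T1 \<Longrightarrow> m2 \<in> T1 \<Longrightarrow> b \<subseteq> tr m1 m2 \<Longrightarrow> b \<inter> w m1 = b \<inter> w m2"
  using LB1_iff by blast

definition W :: "'t \<Rightarrow> 't \<Rightarrow> 't set set" where
  "W m0 = (\<lambda>m. if m \<in> T1 then tr m m0 else undefined)"

lemma W_in: "m0 \<in> T1 \<Longrightarrow> W m0 \<in> LB1'"
  unfolding LB1_iff
proof (intro conjI allI impI ballI)
  fix m assume "m \<in> T1" then show "W m0 m \<in> PC" unfolding W_def using trace_in by simp
next
  fix m assume "m \<notin> T1" then show "W m0 m = undefined" unfolding W_def by simp
next
  fix b m1 m2 assume h: "complemented PC (\<subseteq>) b \<and> m1 \<in> T1 \<and> m2 \<in> T1 \<and> b \<subseteq> tr m1 m2"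
  then have m: "m1 \<in> T1" "m2 \<in> T1" and b12: "b \<subseteq> tr m1 m2" by auto
  have b21: "b \<subseteq> tr m2 m1" using b12 trace_sym[OF m(1)] by (rule order_trans)
  have 1: "b \<inter> tr m1 m0 \<subseteq> tr m2 m0"
    using b12 trace_trans[of m1 m2 m0] by blast
  have 2: "b \<inter> tr m2 m0 \<subseteq> tr m1 m0"
    using b21 trace_trans[of m2 m1 m0] by blast
  show "b \<inter> W m0 m1 = b \<inter> W m0 m2" unfolding W_def using m 1 2 by auto
qed

lemma sigma_eq: "sigma_inv M c0 x = pw_const T1 x"
  unfolding sigma_inv_def pw_const_def ..

lemma sigma_in: "x \<in> PC \<Longrightarrow> sigma_inv M c0 x \<in> LB1'"
  unfolding LB1_iff sigma_inv_def by auto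

lemma inter_lub: "b \<in> PC \<Longrightarrow> S \<subseteq> PC \<Longrightarrow> b \<inter> lub PC (\<subseteq>) S = lub PC (\<subseteq>) ((\<lambda>s. b \<inter> s) ` S)"
proof -
  assume b: "b \<in> PC" and S: "S \<subseteq> PC"
  have "b \<inter> lub PC (\<subseteq>) S = meet2 PC (\<subseteq>) b (lub PC (\<subseteq>) S)" using PC_meet[OF b P.lub_in[OF S]] by simp
  also have "\<dots> = lub PC (\<subseteq>) ((\<lambda>s. meet2 PC (\<subseteq>) b s) ` S)" using b S by (rule P.distrib)
  also have "(\<lambda>s. meet2 PC (\<subseteq>) b s) ` S = (\<lambda>s. b \<inter> s) ` S"
    using b S PC_meet by (intro image_cong) auto
  finally show ?thesis .
qed

lemma LB1_pwf: "pwf PC (\<subseteq>) T1 LB1'"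
proof (unfold_locales)
  fix h assume "h \<in> LB1'" then show "(\<forall>m\<in>T1. h m \<in> PC) \<and> (\<forall>m. m \<notin> T1 \<longrightarrow> h m = undefined)"
    using LB1_val LB1_out by blast
next
  fix S assume S: "S \<subseteq> LB1'"
  have mem: "h \<in> LB1'" if "h \<in> S" for h using S that by (rule subsetD)
  have img: "(\<lambda>h. h m) ` S \<subseteq> PC" if "m \<in> T1" for m
  proof
    fix x assume "x \<in> (\<lambda>h. h m) ` S"
    then obtain h where "h \<in> S" "x = h m" by blast
    then show "x \<in> PC" using mem[of h] that LB1_val by simp
  qed
  show "pw_lub T1 PC (\<subseteq>) S \<in> LB1'" unfolding LB1_iff
  proof (intro conjI allI impI ballI)
    fix m assume "m \<in> T1" then show "pw_lub T1 PC (\<subseteq>) S m \<in> PC"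
      unfolding pw_lub_def using img P.lub_in by simp
  next
    fix m assume "m \<notin> T1" then show "pw_lub T1 PC (\<subseteq>) S m = undefined" unfolding pw_lub_def by simp
  next
    fix b m1 m2 assume h: "complemented PC (\<subseteq>) b \<and> m1 \<in> T1 \<and> m2 \<in> T1 \<and> b \<subseteq> tr m1 m2"
    then have b: "b \<in> PC" and m: "m1 \<in> T1" "m2 \<in> T1" using compl_in by auto
    have e: "b \<inter> w m1 = b \<inter> w m2" if "w \<in> S" for w using h mem[OF that] LB1_compat by blast
    have "b \<inter> pw_lub T1 PC (\<subseteq>) S m1 = lub PC (\<subseteq>) ((\<lambda>s. b \<inter> s) ` (\<lambda>h. h m1) ` S)"
      unfolding pw_lub_def using m inter_lub[OF b img] by simp
    also have "(\<lambda>s. b \<inter> s) ` (\<lambda>h. h m1) ` S = (\<lambda>s. b \<inter> s) ` (\<lambda>h. h m2) ` S"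
      unfolding image_image using e by (intro image_cong) auto
    also have "lub PC (\<subseteq>) \<dots> = b \<inter> pw_lub T1 PC (\<subseteq>) S m2"
      unfolding pw_lub_def using m inter_lub[OF b img] by simp
    finally show "b \<inter> pw_lub T1 PC (\<subseteq>) S m1 = b \<inter> pw_lub T1 PC (\<subseteq>) S m2" .
  qed
next
  fix h h' assume h: "h \<in> LB1'" and h': "h' \<in> LB1'"
  have v: "\<And>m. m \<in> T1 \<Longrightarrow> h m \<in> PC" "\<And>m. m \<in> T1 \<Longrightarrow> h' m \<in> PC" using h h' LB1_val by auto
  have pm: "pw_meet T1 PC (\<subseteq>) h h' = (\<lambda>m. if m \<in> T1 then h m \<inter> h' m else undefined)"
    unfolding pw_meet_def using v PC_meet by (intro ext) auto
  show "pw_meet T1 PC (\<subseteq>) h h' \<in> LB1'" unfolding pm LB1_iff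
  proof (intro conjI allI impI ballI)
    fix m assume "m \<in> T1" then show "(if m \<in> T1 then h m \<inter> h' m else undefined) \<in> PC"
      using v P.meet_in PC_meet by metis
  next
    fix b m1 m2 assume hb: "complemented PC (\<subseteq>) b \<and> m1 \<in> T1 \<and> m2 \<in> T1 \<and> b \<subseteq> tr m1 m2"
    have e1: "b \<inter> h m1 = b \<inter> h m2" and e2: "b \<inter> h' m1 = b \<inter> h' m2" using hb h h' LB1_compat by blast+
    have "b \<inter> (h m1 \<inter> h' m1) = (b \<inter> h m1) \<inter> (b \<inter> h' m1)" by blast
    also have "\<dots> = (b \<inter> h m2) \<inter> (b \<inter> h' m2)" using e1 e2 by simp
    also have "\<dots> = b \<inter> (h m2 \<inter> h' m2)" by blast
    finally show "b \<inter> (if m1 \<in> T1 then h m1 \<inter> h' m1 else undefined) = b \<inter> (if m2 \<in> T1 then h m2 \<inter> h' m2 else undefined)"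
      using hb by simp
  qed simp
next
  show "pw_top T1 PC (\<subseteq>) \<in> LB1'" unfolding LB1_iff pw_top_def using P.top_in by auto
qed

end

context mon begin

abbreviation "le1 \<equiv> pw_le T1 (\<subseteq>)"

lemmas L1_lub = pwf.pw_lub_eq[OF LB1_pwf]
lemmas L1_meet = pwf.pw_meet_eq[OF LB1_pwf]
lemmas L1_top = pwf.pw_top_eq[OF LB1_pwf]
lemmas L1_frame = pwf.pw_is_frame[OF LB1_pwf]

lemma L1_frm: "frm LB1' le1" by (rule frm.intro, rule L1_frame)

lemma W_img: "W ` T1 \<subseteq> LB1'" using W_in by blast

lemma W_lub_top: "lub LB1' le1 (W ` T1) = ftop LB1' le1"
  unfolding L1_lub[OF W_img] L1_top
proof (rule ext)
  fix m show "pw_lub T1 PC (\<subseteq>) (W ` T1) m = pw_top T1 PC (\<subseteq>) m"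
  proof (cases "m \<in> T1")
    case True
    have sub: "(\<lambda>h. h m) ` W ` T1 \<subseteq> PC" using True unfolding W_def using trace_in by auto
    have "W m m = FS" unfolding W_def using True trace_top[OF True] by simp
    then have "FS \<in> (\<lambda>h. h m) ` W ` T1" using True by (intro image_eqI[where x="W m"]) auto
    then have "FS \<subseteq> lub PC (\<subseteq>) ((\<lambda>h. h m) ` W ` T1)" using sub by (rule P.lub_upper[rotated])
    moreover have "lub PC (\<subseteq>) ((\<lambda>h. h m) ` W ` T1) \<subseteq> FS" using P.lub_in[OF sub] PC_sub by blast
    ultimately show ?thesis unfolding pw_lub_def pw_top_def PC_top using True by simp
  qed (simp add: pw_lub_def pw_top_def)
qed

lemma W_meet_le: "m0 \<in> T1 \<Longrightarrow> m1 \<in> T1 \<Longrightarrow> le1 (meet2 LB1' le1 (W m0) (W m1)) (sigma_inv M c0 (tr m0 m1))"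
proof -
  assume m0: "m0 \<in> T1" and m1: "m1 \<in> T1"
  show ?thesis unfolding L1_meet[OF W_in[OF m0] W_in[OF m1]]
    unfolding pw_le_def pw_meet_def sigma_inv_def W_def
    using PC_meet[OF trace_in trace_in] trace_trans by simp
qed

lemma jc_bound:
  assumes J: "Jc x" and a: "a \<in> PC" and z: "z \<in> PC"
    and h: "\<And>b. complemented PC (\<subseteq>) b \<Longrightarrow> b \<subseteq> x \<Longrightarrow> a \<inter> b \<subseteq> z"
  shows "a \<inter> x \<subseteq> z"
proof -
  let ?B = "{b. complemented PC (\<subseteq>) b \<and> b \<subseteq> x}"
  have "a \<inter> x = a \<inter> lub PC (\<subseteq>) ?B" using J unfolding Jc_def by simp
  also have "\<dots> = lub PC (\<subseteq>) ((\<lambda>b. a \<inter> b) ` ?B)" using a Cset_sub by (rule inter_lub)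
  also have "\<dots> \<subseteq> z"
  proof (rule P.lub_least)
    show "(\<lambda>b. a \<inter> b) ` ?B \<subseteq> PC"
    proof
      fix y assume "y \<in> (\<lambda>b. a \<inter> b) ` ?B"
      then obtain b where "complemented PC (\<subseteq>) b" "y = a \<inter> b" by blast
      then show "y \<in> PC" using a compl_in PC_meet P.meet_in by metis
    qed
    show "z \<in> PC" by (rule z)
    fix s assume "s \<in> (\<lambda>b. a \<inter> b) ` ?B"
    then obtain b where "complemented PC (\<subseteq>) b" "b \<subseteq> x" "s = a \<inter> b" by blast
    then show "s \<subseteq> z" using h by blast
  qed
  finally show ?thesis .
qed

lemma LB1_decomp:
  assumes w: "w \<in> LB1'"
  shows "lub LB1' le1 ((\<lambda>m0. meet2 LB1' le1 (sigma_inv M c0 (w m0)) (W m0)) ` T1) = w"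
proof -
  have sig: "sigma_inv M c0 (w m0) \<in> LB1'" if "m0 \<in> T1" for m0 using sigma_in LB1_val[OF w that] .
  have img: "(\<lambda>m0. meet2 LB1' le1 (sigma_inv M c0 (w m0)) (W m0)) ` T1 \<subseteq> LB1'"
  proof
    fix y assume "y \<in> (\<lambda>m0. meet2 LB1' le1 (sigma_inv M c0 (w m0)) (W m0)) ` T1"
    then obtain m0 where m0: "m0 \<in> T1" and y: "y = meet2 LB1' le1 (sigma_inv M c0 (w m0)) (W m0)" by blast
    show "y \<in> LB1'" unfolding y by (rule frm.meet_in[OF L1_frm sig[OF m0] W_in[OF m0]])
  qed
  show ?thesis unfolding L1_lub[OF img]
  proof (rule pwf.F_eqI[OF LB1_pwf pwf.lubc[OF LB1_pwf img] w])
    fix m assume m: "m \<in> T1"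
    have e: "(\<lambda>h. h m) ` (\<lambda>m0. meet2 LB1' le1 (sigma_inv M c0 (w m0)) (W m0)) ` T1 = (\<lambda>m0. w m0 \<inter> tr m m0) ` T1"
      unfolding image_image
    proof (rule image_cong[OF refl])
      fix m0 assume m0: "m0 \<in> T1"
      show "meet2 LB1' le1 (sigma_inv M c0 (w m0)) (W m0) m = w m0 \<inter> tr m m0"
        unfolding L1_meet[OF sig[OF m0] W_in[OF m0]] unfolding pw_meet_def sigma_inv_def W_def
        using m m0 PC_meet[OF LB1_val[OF w m0] trace_in] by simp
    qed
    have sub: "(\<lambda>m0. w m0 \<inter> tr m m0) ` T1 \<subseteq> PC"
      using LB1_val[OF w] trace_in PC_meet P.meet_in by auto
    have wm: "w m \<in> PC" using LB1_val[OF w m] .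
    have "lub PC (\<subseteq>) ((\<lambda>m0. w m0 \<inter> tr m m0) ` T1) = w m"
    proof (rule subset_antisym)
      show "lub PC (\<subseteq>) ((\<lambda>m0. w m0 \<inter> tr m m0) ` T1) \<subseteq> w m"
      proof (rule P.lub_least[OF sub wm])
        fix s assume "s \<in> (\<lambda>m0. w m0 \<inter> tr m m0) ` T1"
        then obtain m0 where m0: "m0 \<in> T1" and s: "s = w m0 \<inter> tr m m0" by blast
        show "s \<subseteq> w m" unfolding s
        proof (rule jc_bound[OF J_trace LB1_val[OF w m0] wm])
          fix b assume b: "complemented PC (\<subseteq>) b" "b \<subseteq> tr m m0"
          have "b \<inter> w m = b \<inter> w m0" using LB1_compat[OF w b(1) m m0 b(2)] .
          then show "w m0 \<inter> b \<subseteq> w m" by blast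
        qed
      qed
      have "w m = w m \<inter> tr m m" using trace_top[OF m] wm PC_sub by blast
      also have "\<dots> \<subseteq> lub PC (\<subseteq>) ((\<lambda>m0. w m0 \<inter> tr m m0) ` T1)"
        using m by (intro P.lub_upper[OF sub]) blast
      finally show "w m \<subseteq> lub PC (\<subseteq>) ((\<lambda>m0. w m0 \<inter> tr m m0) ` T1)" .
    qed
    then show "pw_lub T1 PC (\<subseteq>) ((\<lambda>m0. meet2 LB1' le1 (sigma_inv M c0 (w m0)) (W m0)) ` T1) m = w m"
      unfolding pw_lub_def e using m by simp
  qed
qed

end

locale full = mon M c0 c1 K + L: frm OL leL
  for M :: "('i, 't) set_monad" and c0 c1 :: 'i and K :: "'k set" and OL :: "'l set" and leL :: "'l \<Rightarrow> 'l \<Rightarrow> bool" +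
  fixes finv :: "'t set set \<Rightarrow> 'l"
  assumes f: "frame_hom (pres_carrier (Tm M {c0, c1}) (lb0_rels M c0 c1)) (\<subseteq>) OL leL finv"
begin

lemma FH: "fhom PC (\<subseteq>) OL leL finv"
  by (intro fhom.intro fhom_axioms.intro f frm.intro P.fr L.fr)

lemmas f_in = fhom.hom_in[OF FH]
lemmas f_top = fhom.hom_top[OF FH]
lemmas f_meet = fhom.hom_meet[OF FH]
lemmas f_lub = fhom.hom_lub[OF FH]

abbreviation "PB \<equiv> pb_carrier M c0 c1 K OL leL finv"
abbreviation "leP \<equiv> pw_le T1 leL"

lemma P_iff: "h \<in> PB \<longleftrightarrow> (\<forall>m\<in>T1. h m \<in> OL) \<and> (\<forall>m. m \<notin> T1 \<longrightarrow> h m = undefined) \<and>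
  (\<forall>m1\<in>T1. \<forall>m2\<in>T1. \<forall>b. complemented PC (\<subseteq>) b \<and> b \<subseteq> tr m1 m2 \<longrightarrow>
        meet2 OL leL (h m1) (finv b) = meet2 OL leL (h m2) (finv b))"
  unfolding pb_carrier_def LB0_eq trace_equiv_def mem_Collect_eq ..

lemma P_val: "h \<in> PB \<Longrightarrow> m \<in> T1 \<Longrightarrow> h m \<in> OL" using P_iff by blast
lemma P_compat: "h \<in> PB \<Longrightarrow> complemented PC (\<subseteq>) b \<Longrightarrow> m1 \<in> T1 \<Longrightarrow> m2 \<in> T1 \<Longrightarrow> b \<subseteq> tr m1 m2 \<Longrightarrow>
   meet2 OL leL (h m1) (finv b) = meet2 OL leL (h m2) (finv b)"
  using P_iff by blast

lemma P_I: "(\<And>m. m \<in> T1 \<Longrightarrow> h m \<in> OL) \<Longrightarrow> (\<And>m. m \<notin> T1 \<Longrightarrow> h m = undefined) \<Longrightarrow>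
  (\<And>m1 m2 b. m1 \<in> T1 \<Longrightarrow> m2 \<in> T1 \<Longrightarrow> complemented PC (\<subseteq>) b \<Longrightarrow> b \<subseteq> tr m1 m2 \<Longrightarrow>
        meet2 OL leL (h m1) (finv b) = meet2 OL leL (h m2) (finv b)) \<Longrightarrow> h \<in> PB"
  unfolding P_iff by blast

lemma P_pwf: "pwf OL leL T1 PB"
proof (unfold_locales)
  fix h assume "h \<in> PB" then show "(\<forall>m\<in>T1. h m \<in> OL) \<and> (\<forall>m. m \<notin> T1 \<longrightarrow> h m = undefined)"
    unfolding P_iff by blast
next
  fix S assume S: "S \<subseteq> PB"
  have mem: "h \<in> PB" if "h \<in> S" for h using S that by (rule subsetD)
  have img: "(\<lambda>h. h m) ` S \<subseteq> OL" if "m \<in> T1" for m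
  proof
    fix x assume "x \<in> (\<lambda>h. h m) ` S"
    then obtain h where "h \<in> S" "x = h m" by blast
    then show "x \<in> OL" using mem[of h] that P_val by simp
  qed
  show "pw_lub T1 OL leL S \<in> PB"
  proof (rule P_I)
    fix m assume "m \<in> T1" then show "pw_lub T1 OL leL S m \<in> OL"
      unfolding pw_lub_def using img L.lub_in by simp
  next
    fix m assume "m \<notin> T1" then show "pw_lub T1 OL leL S m = undefined" unfolding pw_lub_def by simp
  next
    fix m1 m2 b assume m: "m1 \<in> T1" "m2 \<in> T1" and b: "complemented PC (\<subseteq>) b" "b \<subseteq> tr m1 m2"
    have fb: "finv b \<in> OL" using f_in compl_in[OF b(1)] .
    have e: "meet2 OL leL (w m1) (finv b) = meet2 OL leL (w m2) (finv b)" if "w \<in> S" for w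
      using P_compat[OF mem[OF that] b(1) m b(2)] .
    have "meet2 OL leL (pw_lub T1 OL leL S m1) (finv b) = lub OL leL ((\<lambda>s. meet2 OL leL s (finv b)) ` (\<lambda>h. h m1) ` S)"
      unfolding pw_lub_def using m L.distrib2[OF fb img] by simp
    also have "(\<lambda>s. meet2 OL leL s (finv b)) ` (\<lambda>h. h m1) ` S = (\<lambda>s. meet2 OL leL s (finv b)) ` (\<lambda>h. h m2) ` S"
      unfolding image_image using e by (intro image_cong) auto
    also have "lub OL leL \<dots> = meet2 OL leL (pw_lub T1 OL leL S m2) (finv b)"
      unfolding pw_lub_def using m L.distrib2[OF fb img] by simp
    finally show "meet2 OL leL (pw_lub T1 OL leL S m1) (finv b) = meet2 OL leL (pw_lub T1 OL leL S m2) (finv b)" .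
  qed
next
  fix h h' assume h: "h \<in> PB" and h': "h' \<in> PB"
  show "pw_meet T1 OL leL h h' \<in> PB"
  proof (rule P_I)
    fix m assume "m \<in> T1" then show "pw_meet T1 OL leL h h' m \<in> OL"
      unfolding pw_meet_def using P_val[OF h] P_val[OF h'] L.meet_in by simp
  next
    fix m assume "m \<notin> T1" then show "pw_meet T1 OL leL h h' m = undefined" unfolding pw_meet_def by simp
  next
    fix m1 m2 b assume m: "m1 \<in> T1" "m2 \<in> T1" and b: "complemented PC (\<subseteq>) b" "b \<subseteq> tr m1 m2"
    have fb: "finv b \<in> OL" using f_in compl_in[OF b(1)] .
    have "meet2 OL leL (pw_meet T1 OL leL h h' m1) (finv b) =
        meet2 OL leL (meet2 OL leL (h m1) (finv b)) (meet2 OL leL (h' m1) (finv b))"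
      unfolding pw_meet_def using m L.meet_distr_self[OF P_val[OF h m(1)] P_val[OF h' m(1)] fb] by simp
    also have "\<dots> = meet2 OL leL (meet2 OL leL (h m2) (finv b)) (meet2 OL leL (h' m2) (finv b))"
      using P_compat[OF h b(1) m b(2)] P_compat[OF h' b(1) m b(2)] by simp
    also have "\<dots> = meet2 OL leL (pw_meet T1 OL leL h h' m2) (finv b)"
      unfolding pw_meet_def using m L.meet_distr_self[OF P_val[OF h m(2)] P_val[OF h' m(2)] fb] by simp
    finally show "meet2 OL leL (pw_meet T1 OL leL h h' m1) (finv b) = meet2 OL leL (pw_meet T1 OL leL h h' m2) (finv b)" .
  qed
next
  show "pw_top T1 OL leL \<in> PB"
    by (rule P_I) (auto simp: pw_top_def intro: L.top_in)
qed

lemmas PB_lub = pwf.pw_lub_eq[OF P_pwf]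
lemmas PB_meet = pwf.pw_meet_eq[OF P_pwf]
lemmas PB_top = pwf.pw_top_eq[OF P_pwf]
lemmas PB_frame = pwf.pw_is_frame[OF P_pwf]
lemmas PB_eqI = pwf.F_eqI[OF P_pwf]
lemmas PB_lubc = pwf.lubc[OF P_pwf]
lemmas PB_meetc = pwf.meetc[OF P_pwf]
lemma PB_frm: "frm PB leP" by (rule frm.intro, rule PB_frame)

lemma P_key:
  assumes h: "h \<in> PB" and m0: "m0 \<in> T1" and m1: "m1 \<in> T1"
  shows "leL (meet2 OL leL (h m1) (finv (tr m0 m1))) (h m0)"
proof -
  let ?B = "{b. complemented PC (\<subseteq>) b \<and> b \<subseteq> tr m0 m1}"
  have hm1: "h m1 \<in> OL" and hm0: "h m0 \<in> OL" using P_val h m0 m1 by auto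
  have fB: "finv ` ?B \<subseteq> OL" using f_in Cset_sub by blast
  have "finv (tr m0 m1) = finv (lub PC (\<subseteq>) ?B)" using J_trace unfolding Jc_def by metis
  also have "\<dots> = lub OL leL (finv ` ?B)" using Cset_sub by (rule f_lub)
  finally have "meet2 OL leL (h m1) (finv (tr m0 m1)) = meet2 OL leL (h m1) (lub OL leL (finv ` ?B))" by simp
  also have "\<dots> = lub OL leL ((\<lambda>s. meet2 OL leL (h m1) s) ` finv ` ?B)" using hm1 fB by (rule L.distrib)
  also have "leL \<dots> (h m0)"
  proof (rule L.lub_least)
    show "(\<lambda>s. meet2 OL leL (h m1) s) ` finv ` ?B \<subseteq> OL" using hm1 fB L.meet_in by blast
    show "h m0 \<in> OL" by (rule hm0)
    fix s assume "s \<in> (\<lambda>s. meet2 OL leL (h m1) s) ` finv ` ?B"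
    then obtain b where b: "complemented PC (\<subseteq>) b" "b \<subseteq> tr m0 m1" and s: "s = meet2 OL leL (h m1) (finv b)" by blast
    have fb: "finv b \<in> OL" using f_in compl_in[OF b(1)] .
    have "s = meet2 OL leL (h m0) (finv b)" unfolding s using P_compat[OF h b(1) m0 m1 b(2)] by simp
    then show "leL s (h m0)" using L.meet_le1[OF hm0 fb] by simp
  qed
  finally show ?thesis .
qed

lemma pinl_in: "x \<in> OL \<Longrightarrow> pb_inl M c0 x \<in> PB"
  by (rule P_I) (auto simp: pb_inl_def)

lemma pinr_in: "w \<in> LB1' \<Longrightarrow> pb_inr M c0 finv w \<in> PB"
proof (rule P_I)
  assume w: "w \<in> LB1'"
  fix m assume "m \<in> T1" then show "pb_inr M c0 finv w m \<in> OL"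
    unfolding pb_inr_def using f_in LB1_val[OF w] by simp
next
  fix m assume "m \<notin> T1" then show "pb_inr M c0 finv w m = undefined" unfolding pb_inr_def by simp
next
  assume w: "w \<in> LB1'"
  fix m1 m2 b assume m: "m1 \<in> T1" "m2 \<in> T1" and b: "complemented PC (\<subseteq>) b" "b \<subseteq> tr m1 m2"
  have bP: "b \<in> PC" using compl_in[OF b(1)] .
  have "meet2 OL leL (finv (w m1)) (finv b) = finv (w m1 \<inter> b)"
    using f_meet[OF LB1_val[OF w m(1)] bP] PC_meet[OF LB1_val[OF w m(1)] bP] by simp
  also have "w m1 \<inter> b = w m2 \<inter> b" using LB1_compat[OF w b(1) m b(2)] by blast
  also have "finv (w m2 \<inter> b) = meet2 OL leL (finv (w m2)) (finv b)"
    using f_meet[OF LB1_val[OF w m(2)] bP] PC_meet[OF LB1_val[OF w m(2)] bP] by simp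
  finally show "meet2 OL leL (pb_inr M c0 finv w m1) (finv b) = meet2 OL leL (pb_inr M c0 finv w m2) (finv b)"
    unfolding pb_inr_def using m by simp
qed

lemma hom_inl: "frame_hom OL leL PB leP (pb_inl M c0)"
  unfolding frame_hom_def
proof (intro conjI ballI allI impI)
  fix x assume "x \<in> OL" then show "pb_inl M c0 x \<in> PB" by (rule pinl_in)
next
  show "pb_inl M c0 (ftop OL leL) = ftop PB leP" unfolding PB_top pb_inl_def pw_top_def ..
next
  fix a b assume a: "a \<in> OL" and b: "b \<in> OL"
  show "pb_inl M c0 (meet2 OL leL a b) = meet2 PB leP (pb_inl M c0 a) (pb_inl M c0 b)"
    unfolding PB_meet[OF pinl_in[OF a] pinl_in[OF b]] by (auto simp: pb_inl_def pw_meet_def)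
next
  fix S assume S: "S \<subseteq> OL"
  have sub: "pb_inl M c0 ` S \<subseteq> PB" using S pinl_in by blast
  show "pb_inl M c0 (lub OL leL S) = lub PB leP (pb_inl M c0 ` S)"
    unfolding PB_lub[OF sub]
  proof (rule ext)
    fix m show "pb_inl M c0 (lub OL leL S) m = pw_lub T1 OL leL (pb_inl M c0 ` S) m"
    proof (cases "m \<in> T1")
      case True
      have "(\<lambda>h. h m) ` pb_inl M c0 ` S = S" unfolding image_image pb_inl_def using True by simp
      then show ?thesis unfolding pw_lub_def pb_inl_def using True by simp
    qed (simp add: pw_lub_def pb_inl_def)
  qed
qed

lemma hom_inr: "frame_hom LB1' le1 PB leP (pb_inr M c0 finv)"
  unfolding frame_hom_def
proof (intro conjI ballI allI impI)
  fix x assume "x \<in> LB1'" then show "pb_inr M c0 finv x \<in> PB" by (rule pinr_in)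
next
  show "pb_inr M c0 finv (ftop LB1' le1) = ftop PB leP"
    unfolding PB_top L1_top pb_inr_def pw_top_def using f_top by (intro ext) simp
next
  fix a b assume a: "a \<in> LB1'" and b: "b \<in> LB1'"
  show "pb_inr M c0 finv (meet2 LB1' le1 a b) = meet2 PB leP (pb_inr M c0 finv a) (pb_inr M c0 finv b)"
    unfolding PB_meet[OF pinr_in[OF a] pinr_in[OF b]] L1_meet[OF a b]
    by (auto simp: pb_inr_def pw_meet_def f_meet LB1_val[OF a] LB1_val[OF b])
next
  fix S assume S: "S \<subseteq> LB1'"
  have sub: "pb_inr M c0 finv ` S \<subseteq> PB" using S pinr_in by blast
  show "pb_inr M c0 finv (lub LB1' le1 S) = lub PB leP (pb_inr M c0 finv ` S)"
    unfolding PB_lub[OF sub] L1_lub[OF S]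
  proof (rule ext)
    fix m show "pb_inr M c0 finv (pw_lub T1 PC (\<subseteq>) S) m = pw_lub T1 OL leL (pb_inr M c0 finv ` S) m"
    proof (cases "m \<in> T1")
      case True
      have img: "(\<lambda>h. h m) ` S \<subseteq> PC" using S LB1_val True by blast
      have "(\<lambda>h. h m) ` pb_inr M c0 finv ` S = finv ` (\<lambda>h. h m) ` S"
        unfolding image_image pb_inr_def using True by simp
      then show ?thesis unfolding pw_lub_def pb_inr_def using True f_lub[OF img] by simp
    qed (simp add: pw_lub_def pb_inr_def)
  qed
qed

lemma commute: "x \<in> PC \<Longrightarrow> pb_inl M c0 (finv x) = pb_inr M c0 finv (sigma_inv M c0 x)"
  unfolding pb_inl_def pb_inr_def sigma_inv_def by (intro ext) simp

lemma cocone: "frame_cocone PC (\<subseteq>) OL leL LB1' le1 finv (sigma_inv M c0) PB leP (pb_inl M c0) (pb_inr M c0 finv)"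
  unfolding frame_cocone_def using PB_frame hom_inl hom_inr commute by blast

lemma P_decomp:
  assumes h: "h \<in> PB"
  shows "lub PB leP ((\<lambda>m0. meet2 PB leP (pb_inl M c0 (h m0)) (pb_inr M c0 finv (W m0))) ` T1) = h"
proof -
  have il: "pb_inl M c0 (h m0) \<in> PB" if "m0 \<in> T1" for m0 using pinl_in P_val[OF h that] .
  have ir: "pb_inr M c0 finv (W m0) \<in> PB" if "m0 \<in> T1" for m0 using pinr_in W_in[OF that] .
  have img: "(\<lambda>m0. meet2 PB leP (pb_inl M c0 (h m0)) (pb_inr M c0 finv (W m0))) ` T1 \<subseteq> PB"
  proof
    fix y assume "y \<in> (\<lambda>m0. meet2 PB leP (pb_inl M c0 (h m0)) (pb_inr M c0 finv (W m0))) ` T1"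
    then obtain m0 where m0: "m0 \<in> T1" and y: "y = meet2 PB leP (pb_inl M c0 (h m0)) (pb_inr M c0 finv (W m0))" by blast
    show "y \<in> PB" unfolding y by (rule frm.meet_in[OF PB_frm il[OF m0] ir[OF m0]])
  qed
  show ?thesis unfolding PB_lub[OF img]
  proof (rule PB_eqI[OF PB_lubc[OF img] h])
    fix m assume m: "m \<in> T1"
    have e: "(\<lambda>g. g m) ` (\<lambda>m0. meet2 PB leP (pb_inl M c0 (h m0)) (pb_inr M c0 finv (W m0))) ` T1
        = (\<lambda>m0. meet2 OL leL (h m0) (finv (tr m m0))) ` T1"
      unfolding image_image
    proof (rule image_cong[OF refl])
      fix m0 assume m0: "m0 \<in> T1"
      show "meet2 PB leP (pb_inl M c0 (h m0)) (pb_inr M c0 finv (W m0)) m = meet2 OL leL (h m0) (finv (tr m m0))"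
        unfolding PB_meet[OF il[OF m0] ir[OF m0]] unfolding pw_meet_def pb_inl_def pb_inr_def W_def
        using m by simp
    qed
    have sub: "(\<lambda>m0. meet2 OL leL (h m0) (finv (tr m m0))) ` T1 \<subseteq> OL"
      using P_val[OF h] f_in[OF trace_in] L.meet_in by blast
    have hm: "h m \<in> OL" using P_val[OF h m] .
    have "lub OL leL ((\<lambda>m0. meet2 OL leL (h m0) (finv (tr m m0))) ` T1) = h m"
    proof (rule L.antisym[OF L.lub_in[OF sub] hm])
      show "leL (lub OL leL ((\<lambda>m0. meet2 OL leL (h m0) (finv (tr m m0))) ` T1)) (h m)"
      proof (rule L.lub_least[OF sub hm])
        fix s assume "s \<in> (\<lambda>m0. meet2 OL leL (h m0) (finv (tr m m0))) ` T1"
        then obtain m0 where m0: "m0 \<in> T1" and s: "s = meet2 OL leL (h m0) (finv (tr m m0))" by blast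
        show "leL s (h m)" unfolding s by (rule P_key[OF h m m0])
      qed
      have "finv (tr m m) = ftop OL leL" using trace_top[OF m] f_top PC_top by simp
      then have "h m = meet2 OL leL (h m) (finv (tr m m))" using L.meet_top[OF hm] by simp
      moreover have "leL (meet2 OL leL (h m) (finv (tr m m))) (lub OL leL ((\<lambda>m0. meet2 OL leL (h m0) (finv (tr m m0))) ` T1))"
        using m by (intro L.lub_upper[OF sub]) blast
      ultimately show "leL (h m) (lub OL leL ((\<lambda>m0. meet2 OL leL (h m0) (finv (tr m m0))) ` T1))" by simp
    qed
    then show "pw_lub T1 OL leL ((\<lambda>m0. meet2 PB leP (pb_inl M c0 (h m0)) (pb_inr M c0 finv (W m0))) ` T1) m = h m"
      unfolding pw_lub_def e using m by simp
  qed
qed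

end

context frm begin
lemma lub_lub: "(\<And>i. i \<in> I \<Longrightarrow> A i \<subseteq> X) \<Longrightarrow> lub X le ((\<lambda>i. lub X le (A i)) ` I) = lub X le (\<Union>i\<in>I. A i)"
proof -
  assume A: "\<And>i. i \<in> I \<Longrightarrow> A i \<subseteq> X"
  have U: "(\<Union>i\<in>I. A i) \<subseteq> X" using A by blast
  have im: "(\<lambda>i. lub X le (A i)) ` I \<subseteq> X" using A lub_in by blast
  show ?thesis
  proof (rule antisym[OF lub_in[OF im] lub_in[OF U]])
    show "le (lub X le ((\<lambda>i. lub X le (A i)) ` I)) (lub X le (\<Union>i\<in>I. A i))"
    proof (rule lub_least[OF im lub_in[OF U]])
      fix s assume "s \<in> (\<lambda>i. lub X le (A i)) ` I"
      then obtain i where i: "i \<in> I" and s: "s = lub X le (A i)" by blast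
      show "le s (lub X le (\<Union>i\<in>I. A i))" unfolding s by (rule lub_mono[OF _ U]) (use i in blast)
    qed
    show "le (lub X le (\<Union>i\<in>I. A i)) (lub X le ((\<lambda>i. lub X le (A i)) ` I))"
    proof (rule lub_least[OF U lub_in[OF im]])
      fix s assume "s \<in> (\<Union>i\<in>I. A i)"
      then obtain i where i: "i \<in> I" and s: "s \<in> A i" by blast
      have "le s (lub X le (A i))" using A[OF i] s by (rule lub_upper)
      moreover have "le (lub X le (A i)) (lub X le ((\<lambda>i. lub X le (A i)) ` I))"
        using i by (intro lub_upper[OF im]) blast
      ultimately show "le s (lub X le ((\<lambda>i. lub X le (A i)) ` I))"
        using trans s A[OF i] lub_in[OF A[OF i]] lub_in[OF im] by blast
    qed
  qed
qed

end

context full begin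

lemma universal:
  fixes Q :: "'q set" and leQ p q
  assumes cc: "frame_cocone PC (\<subseteq>) OL leL LB1' le1 finv (sigma_inv M c0) Q leQ p q"
  shows "frame_mediates OL LB1' PB leP (pb_inl M c0) (pb_inr M c0 finv) Q leQ p q"
proof -
  have Qf: "is_frame Q leQ" and hp: "frame_hom OL leL Q leQ p" and hq: "frame_hom LB1' le1 Q leQ q"
    and com: "\<And>x. x \<in> PC \<Longrightarrow> p (finv x) = q (sigma_inv M c0 x)"
    using cc unfolding frame_cocone_def by blast+
  interpret Q: frm Q leQ by (rule frm.intro) (rule Qf)
  have Hp: "fhom OL leL Q leQ p" by (intro fhom.intro fhom_axioms.intro hp frm.intro L.fr Qf)
  have Hq: "fhom LB1' le1 Q leQ q" by (intro fhom.intro fhom_axioms.intro hq frm.intro L1_frame Qf)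
  note p_in = fhom.hom_in[OF Hp] and p_top = fhom.hom_top[OF Hp] and p_meet = fhom.hom_meet[OF Hp]
    and p_lub = fhom.hom_lub[OF Hp] and p_mono = fhom.hom_mono[OF Hp]
  note q_in = fhom.hom_in[OF Hq] and q_top = fhom.hom_top[OF Hq] and q_meet = fhom.hom_meet[OF Hq]
    and q_lub = fhom.hom_lub[OF Hq] and q_mono = fhom.hom_mono[OF Hq]
  have qW: "q (W m0) \<in> Q" if "m0 \<in> T1" for m0 using q_in W_in that by blast
  have ph: "p (h m0) \<in> Q" if "h \<in> PB" "m0 \<in> T1" for h m0 using p_in P_val that by blast
  define r where "r h = lub Q leQ ((\<lambda>m0. meet2 Q leQ (p (h m0)) (q (W m0))) ` T1)" for h
  have img: "(\<lambda>m0. meet2 Q leQ (p (h m0)) (q (W m0))) ` T1 \<subseteq> Q" if "h \<in> PB" for h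
    using ph[OF that] qW Q.meet_in by blast
  have r_in: "r h \<in> Q" if "h \<in> PB" for h unfolding r_def using img[OF that] by (rule Q.lub_in)
  have r_up: "leQ (meet2 Q leQ (p (h m0)) (q (W m0))) (r h)" if "h \<in> PB" "m0 \<in> T1" for h m0
    unfolding r_def using img[OF that(1)] that(2) by (intro Q.lub_upper) blast+

  have uniq: "r' h = r h" if r': "frame_hom PB leP Q leQ r'" "\<forall>y\<in>OL. r' (pb_inl M c0 y) = p y"
      "\<forall>z\<in>LB1'. r' (pb_inr M c0 finv z) = q z" and h: "h \<in> PB" for r' h
  proof -
    have Hr: "fhom PB leP Q leQ r'" by (intro fhom.intro fhom_axioms.intro r'(1) frm.intro PB_frame Qf)
    have il: "pb_inl M c0 (h m0) \<in> PB" if "m0 \<in> T1" for m0 using pinl_in P_val[OF h that] .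
    have ir: "pb_inr M c0 finv (W m0) \<in> PB" if "m0 \<in> T1" for m0 using pinr_in W_in[OF that] .
    have sub: "(\<lambda>m0. meet2 PB leP (pb_inl M c0 (h m0)) (pb_inr M c0 finv (W m0))) ` T1 \<subseteq> PB"
      using frm.meet_in[OF PB_frm il ir] by blast
    have "r' h = r' (lub PB leP ((\<lambda>m0. meet2 PB leP (pb_inl M c0 (h m0)) (pb_inr M c0 finv (W m0))) ` T1))"
      using P_decomp[OF h] by simp
    also have "\<dots> = lub Q leQ (r' ` (\<lambda>m0. meet2 PB leP (pb_inl M c0 (h m0)) (pb_inr M c0 finv (W m0))) ` T1)"
      using fhom.hom_lub[OF Hr sub] .
    also have "r' ` (\<lambda>m0. meet2 PB leP (pb_inl M c0 (h m0)) (pb_inr M c0 finv (W m0))) ` T1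
        = (\<lambda>m0. meet2 Q leQ (p (h m0)) (q (W m0))) ` T1"
      unfolding image_image
    proof (rule image_cong[OF refl])
      fix m0 assume m0: "m0 \<in> T1"
      show "r' (meet2 PB leP (pb_inl M c0 (h m0)) (pb_inr M c0 finv (W m0))) = meet2 Q leQ (p (h m0)) (q (W m0))"
        using fhom.hom_meet[OF Hr il[OF m0] ir[OF m0]] r'(2) r'(3) P_val[OF h m0] W_in[OF m0] by simp
    qed
    finally show ?thesis unfolding r_def .
  qed

  have r_inl: "r (pb_inl M c0 y) = p y" if y: "y \<in> OL" for y
  proof -
    have py: "p y \<in> Q" using p_in y .
    have WT: "q ` W ` T1 \<subseteq> Q" using qW by blast
    have "r (pb_inl M c0 y) = lub Q leQ ((\<lambda>s. meet2 Q leQ (p y) s) ` q ` W ` T1)"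
      unfolding r_def image_image pb_inl_def by (intro arg_cong[where f="lub Q leQ"] image_cong) auto
    also have "\<dots> = meet2 Q leQ (p y) (lub Q leQ (q ` W ` T1))" using Q.distrib[OF py WT] by simp
    also have "lub Q leQ (q ` W ` T1) = q (lub LB1' le1 (W ` T1))" using q_lub[OF W_img] by simp
    also have "\<dots> = ftop Q leQ" unfolding W_lub_top q_top ..
    finally show ?thesis using Q.meet_top[OF py] by simp
  qed

  have r_inr: "r (pb_inr M c0 finv w) = q w" if w: "w \<in> LB1'" for w
  proof -
    have sig: "sigma_inv M c0 (w m0) \<in> LB1'" if "m0 \<in> T1" for m0 using sigma_in LB1_val[OF w that] .
    have sub: "(\<lambda>m0. meet2 LB1' le1 (sigma_inv M c0 (w m0)) (W m0)) ` T1 \<subseteq> LB1'"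
      using frm.meet_in[OF L1_frm sig W_in] by blast
    have "r (pb_inr M c0 finv w) = lub Q leQ (q ` (\<lambda>m0. meet2 LB1' le1 (sigma_inv M c0 (w m0)) (W m0)) ` T1)"
      unfolding r_def image_image
    proof (intro arg_cong[where f="lub Q leQ"] image_cong[OF refl])
      fix m0 assume m0: "m0 \<in> T1"
      have "p (pb_inr M c0 finv w m0) = q (sigma_inv M c0 (w m0))"
        unfolding pb_inr_def using m0 com[OF LB1_val[OF w m0]] by simp
      then show "meet2 Q leQ (p (pb_inr M c0 finv w m0)) (q (W m0)) = q (meet2 LB1' le1 (sigma_inv M c0 (w m0)) (W m0))"
        using q_meet[OF sig[OF m0] W_in[OF m0]] by simp
    qed
    also have "\<dots> = q (lub LB1' le1 ((\<lambda>m0. meet2 LB1' le1 (sigma_inv M c0 (w m0)) (W m0)) ` T1))"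
      using q_lub[OF sub] by simp
    also have "\<dots> = q w" using LB1_decomp[OF w] by simp
    finally show ?thesis .
  qed

  have r_top: "r (ftop PB leP) = ftop Q leQ"
  proof -
    have "ftop PB leP = pb_inl M c0 (ftop OL leL)" unfolding PB_top pw_top_def pb_inl_def ..
    then show ?thesis using r_inl[OF L.top_in] p_top by simp
  qed

  have r_mono: "leQ (r h) (r h')" if h: "h \<in> PB" and h': "h' \<in> PB" and le: "leP h h'" for h h'
    unfolding r_def
  proof (rule Q.lub_least[OF img[OF h] Q.lub_in[OF img[OF h']]])
    fix s assume "s \<in> (\<lambda>m0. meet2 Q leQ (p (h m0)) (q (W m0))) ` T1"
    then obtain m0 where m0: "m0 \<in> T1" and s: "s = meet2 Q leQ (p (h m0)) (q (W m0))" by blast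
    have "leL (h m0) (h' m0)" using le m0 unfolding pw_le_def by blast
    then have "leQ (p (h m0)) (p (h' m0))" using p_mono P_val h h' m0 by blast
    then have "leQ s (meet2 Q leQ (p (h' m0)) (q (W m0)))" unfolding s
      using Q.meet_mono[OF ph[OF h m0] qW[OF m0] ph[OF h' m0] qW[OF m0]] Q.refl[OF qW[OF m0]] by blast
    moreover have "leQ (meet2 Q leQ (p (h' m0)) (q (W m0))) (r h')" using r_up[OF h' m0] .
    ultimately show "leQ s (lub Q leQ ((\<lambda>m0. meet2 Q leQ (p (h' m0)) (q (W m0))) ` T1))"
      unfolding r_def using Q.trans Q.meet_in[OF ph[OF h m0] qW[OF m0]] Q.meet_in[OF ph[OF h' m0] qW[OF m0]]
        r_in[OF h'] s unfolding r_def by blast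
  qed

  have r_meet: "r (meet2 PB leP h h') = meet2 Q leQ (r h) (r h')" if h: "h \<in> PB" and h': "h' \<in> PB" for h h'
  proof -
    let ?hh = "meet2 PB leP h h'"
    have hh: "?hh \<in> PB" using frm.meet_in[OF PB_frm h h'] .
    have hhv: "?hh m0 = meet2 OL leL (h m0) (h' m0)" if "m0 \<in> T1" for m0
      unfolding PB_meet[OF h h'] pw_meet_def using that by simp
    show ?thesis
    proof (rule Q.antisym[OF r_in[OF hh] Q.meet_in[OF r_in[OF h] r_in[OF h']]])
      show "leQ (r ?hh) (meet2 Q leQ (r h) (r h'))"
        using r_mono[OF hh h frm.meet_le1[OF PB_frm h h']] r_mono[OF hh h' frm.meet_le2[OF PB_frm h h']]
        by (intro Q.meet_greatest r_in h h' hh)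
      show "leQ (meet2 Q leQ (r h) (r h')) (r ?hh)"
        unfolding r_def
      proof (rule Q.meet_lub_lub_le[OF img[OF h] img[OF h'] Q.lub_in[OF img[OF hh]]])
        fix s s' assume "s \<in> (\<lambda>m0. meet2 Q leQ (p (h m0)) (q (W m0))) ` T1"
          and "s' \<in> (\<lambda>m0. meet2 Q leQ (p (h' m0)) (q (W m0))) ` T1"
        then obtain m0 m1 where m0: "m0 \<in> T1" and m1: "m1 \<in> T1"
          and s: "s = meet2 Q leQ (p (h m0)) (q (W m0))" and s': "s' = meet2 Q leQ (p (h' m1)) (q (W m1))" by blast
        let ?a0 = "p (h m0)" and ?b1 = "p (h' m1)" and ?q0 = "q (W m0)" and ?q1 = "q (W m1)"
        have a0: "?a0 \<in> Q" and b1: "?b1 \<in> Q" and q0: "?q0 \<in> Q" and q1: "?q1 \<in> Q"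
          using ph h h' m0 m1 qW by auto
        have sQ: "s \<in> Q" and s'Q: "s' \<in> Q" unfolding s s' using a0 b1 q0 q1 Q.meet_in by auto
        let ?x = "meet2 Q leQ s s'"
        have x: "?x \<in> Q" using sQ s'Q by (rule Q.meet_in)
        have xs: "leQ ?x s" and xs': "leQ ?x s'" using sQ s'Q Q.meet_le1 Q.meet_le2 by auto
        have xa0: "leQ ?x ?a0" using Q.trans[OF x sQ a0 xs] Q.meet_le1[OF a0 q0] unfolding s by blast
        have xq0: "leQ ?x ?q0" using Q.trans[OF x sQ q0 xs] Q.meet_le2[OF a0 q0] unfolding s by blast
        have xb1: "leQ ?x ?b1" using Q.trans[OF x s'Q b1 xs'] Q.meet_le1[OF b1 q1] unfolding s' by blast
        have xq1: "leQ ?x ?q1" using Q.trans[OF x s'Q q1 xs'] Q.meet_le2[OF b1 q1] unfolding s' by blast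
        let ?t = "tr m0 m1"
        have tP: "?t \<in> PC" by (rule trace_in)
        have "leQ (meet2 Q leQ ?q0 ?q1) (q (sigma_inv M c0 ?t))"
          using q_meet[OF W_in[OF m0] W_in[OF m1]] q_mono[OF frm.meet_in[OF L1_frm W_in[OF m0] W_in[OF m1]]
              sigma_in[OF tP] W_meet_le[OF m0 m1]] by simp
        then have "leQ (meet2 Q leQ ?q0 ?q1) (p (finv ?t))" using com[OF tP] by simp
        moreover have "leQ ?x (meet2 Q leQ ?q0 ?q1)" using xq0 xq1 x q0 q1 by (intro Q.meet_greatest)
        ultimately have xt: "leQ ?x (p (finv ?t))"
          using Q.trans[OF x Q.meet_in[OF q0 q1] p_in[OF f_in[OF tP]]] by blast
        have hm1: "h' m1 \<in> OL" and hm0': "h' m0 \<in> OL" and hm0: "h m0 \<in> OL" using P_val h h' m0 m1 by auto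
        have ft: "finv ?t \<in> OL" using f_in[OF tP] .
        have "leQ ?x (meet2 Q leQ ?b1 (p (finv ?t)))" using xb1 xt x b1 p_in[OF ft] by (intro Q.meet_greatest)
        also have "meet2 Q leQ ?b1 (p (finv ?t)) = p (meet2 OL leL (h' m1) (finv ?t))" using p_meet[OF hm1 ft] by simp
        finally have "leQ ?x (p (meet2 OL leL (h' m1) (finv ?t)))" .
        moreover have "leQ (p (meet2 OL leL (h' m1) (finv ?t))) (p (h' m0))"
          using p_mono[OF L.meet_in[OF hm1 ft] hm0' P_key[OF h' m0 m1]] .
        ultimately have xb0: "leQ ?x (p (h' m0))"
          using Q.trans[OF x p_in[OF L.meet_in[OF hm1 ft]] p_in[OF hm0']] by blast
        have "leQ ?x (meet2 Q leQ ?a0 (p (h' m0)))" using xa0 xb0 x a0 p_in[OF hm0'] by (intro Q.meet_greatest)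
        also have "meet2 Q leQ ?a0 (p (h' m0)) = p (?hh m0)" using p_meet[OF hm0 hm0'] hhv[OF m0] by simp
        finally have "leQ ?x (p (?hh m0))" .
        then have "leQ ?x (meet2 Q leQ (p (?hh m0)) ?q0)" using xq0 x ph[OF hh m0] q0 by (intro Q.meet_greatest)
        moreover have "leQ (meet2 Q leQ (p (?hh m0)) ?q0) (r ?hh)" using r_up[OF hh m0] .
        ultimately show "leQ ?x (lub Q leQ ((\<lambda>m0. meet2 Q leQ (p (?hh m0)) (q (W m0))) ` T1))"
          using Q.trans[OF x Q.meet_in[OF ph[OF hh m0] q0] r_in[OF hh]] unfolding r_def by blast
      qed
    qed
  qed

  have r_lub: "r (lub PB leP S) = lub Q leQ (r ` S)" if S: "S \<subseteq> PB" for S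
  proof -
    let ?F = "\<lambda>h m0. meet2 Q leQ (p (h m0)) (q (W m0))"
    have Fin: "?F h m0 \<in> Q" if "h \<in> S" "m0 \<in> T1" for h m0 using S that ph qW Q.meet_in by blast
    have imS: "(\<lambda>h. h m0) ` S \<subseteq> OL" if "m0 \<in> T1" for m0 using S P_val that by blast
    have "r (lub PB leP S) = lub Q leQ ((\<lambda>m0. lub Q leQ ((\<lambda>h. ?F h m0) ` S)) ` T1)"
      unfolding r_def PB_lub[OF S]
    proof (intro arg_cong[where f="lub Q leQ"] image_cong[OF refl])
      fix m0 assume m0: "m0 \<in> T1"
      have pi: "p ` (\<lambda>h. h m0) ` S \<subseteq> Q" using imS[OF m0] p_in by blast
      have "p (pw_lub T1 OL leL S m0) = lub Q leQ (p ` (\<lambda>h. h m0) ` S)"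
        unfolding pw_lub_def using m0 p_lub[OF imS[OF m0]] by simp
      then have "meet2 Q leQ (p (pw_lub T1 OL leL S m0)) (q (W m0)) = lub Q leQ ((\<lambda>s. meet2 Q leQ s (q (W m0))) ` p ` (\<lambda>h. h m0) ` S)"
        using Q.distrib2[OF qW[OF m0] pi] by simp
      then show "meet2 Q leQ (p (pw_lub T1 OL leL S m0)) (q (W m0)) = lub Q leQ ((\<lambda>h. ?F h m0) ` S)"
        unfolding image_image .
    qed
    also have "\<dots> = lub Q leQ (\<Union>m0\<in>T1. (\<lambda>h. ?F h m0) ` S)"
      using Fin by (intro Q.lub_lub) blast
    also have "(\<Union>m0\<in>T1. (\<lambda>h. ?F h m0) ` S) = (\<Union>h\<in>S. (\<lambda>m0. ?F h m0) ` T1)" by blast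
    also have "lub Q leQ \<dots> = lub Q leQ ((\<lambda>h. lub Q leQ ((\<lambda>m0. ?F h m0) ` T1)) ` S)"
      using Fin by (intro Q.lub_lub[symmetric]) blast
    also have "\<dots> = lub Q leQ (r ` S)" unfolding r_def ..
    finally show ?thesis .
  qed

  have rhom: "frame_hom PB leP Q leQ r"
    unfolding frame_hom_def using r_in r_top r_meet r_lub by blast

  show ?thesis unfolding frame_mediates_def
  proof (intro conjI allI impI ballI)
    show "\<exists>r. frame_hom PB leP Q leQ r \<and> (\<forall>y\<in>OL. r (pb_inl M c0 y) = p y) \<and> (\<forall>z\<in>LB1'. r (pb_inr M c0 finv z) = q z)"
      using rhom r_inl r_inr by blast
  next
    fix r1 r2 x assume h: "frame_hom PB leP Q leQ r1 \<and> (\<forall>y\<in>OL. r1 (pb_inl M c0 y) = p y) \<and> (\<forall>z\<in>LB1'. r1 (pb_inr M c0 finv z) = q z) \<and>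
        frame_hom PB leP Q leQ r2 \<and> (\<forall>y\<in>OL. r2 (pb_inl M c0 y) = p y) \<and> (\<forall>z\<in>LB1'. r2 (pb_inr M c0 finv z) = q z)"
      and x: "x \<in> PB"
    have "r1 x = r x" using h x by (intro uniq) auto
    moreover have "r2 x = r x" using h x by (intro uniq) auto
    ultimately show "r1 x = r2 x" by simp
  qed
qed

end

theorem lemma3p14:
  fixes M :: "('i, 't) set_monad" and c0 c1 :: 'i and K :: "'k set"
    and OL :: "'l set" and leL :: "'l \<Rightarrow> 'l \<Rightarrow> bool"
    and finv :: "'t set set \<Rightarrow> 'l"
  assumes monad: "is_set_monad M"
    and rank: "ranked M K"
    and universe: "(card_of K, card_of (UNIV :: 'i set)) \<in> ordLeq"
    and two: "c0 \<noteq> c1"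
    and locale_L: "is_frame OL leL"
    and f: "frame_hom (LB0 M c0 c1) (\<subseteq>) OL leL finv"
  shows "frame_cocone (LB0 M c0 c1) (\<subseteq>) OL leL (LB1 M c0 c1 K) (LB1_le M c0) finv (sigma_inv M c0)
           (pb_carrier M c0 c1 K OL leL finv) (pb_le M c0 leL) (pb_inl M c0) (pb_inr M c0 finv)
       \<and> (\<forall>(Q :: 'q set) leQ p q.
            frame_cocone (LB0 M c0 c1) (\<subseteq>) OL leL (LB1 M c0 c1 K) (LB1_le M c0) finv (sigma_inv M c0)
              Q leQ p q \<longrightarrow>
            frame_mediates OL (LB1 M c0 c1 K) (pb_carrier M c0 c1 K OL leL finv) (pb_le M c0 leL)
              (pb_inl M c0) (pb_inr M c0 finv) Q leQ p q)"
proof -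
  have F: "full M c0 c1 K OL leL finv"
    unfolding full_def full_axioms_def mon_def frm_def using monad rank locale_L f unfolding LB0_def by blast
  interpret full M c0 c1 K OL leL finv by (rule F)
  have e1: "LB1_le M c0 = le1" by (intro ext) (simp add: LB1_le_def pw_le_def)
  have e2: "pb_le M c0 leL = leP" by (intro ext) (simp add: pb_le_def pw_le_def)
  show ?thesis unfolding e1 e2 LB0_eq
  proof (intro conjI allI impI)
    show "frame_cocone PC (\<subseteq>) OL leL LB1' le1 finv (sigma_inv M c0) PB leP (pb_inl M c0) (pb_inr M c0 finv)"
      by (rule cocone)
    fix Q :: "'q set" and leQ p q
    assume "frame_cocone PC (\<subseteq>) OL leL LB1' le1 finv (sigma_inv M c0) Q leQ p q"
    then show "frame_mediates OL LB1' PB leP (pb_inl M c0) (pb_inr M c0 finv) Q leQ p q"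
      by (rule universal)
  qed
qed

end
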